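(* Let $k\ge0$, $p\in[0,1]$, fix sequences $\xi^x,\xi^y$, and let $I=\bigcup_{i=i_0}^{i_1}I^x_{(k,i)}$ with $0\le i_1-i_0\le L-1$. Suppose there is $i'\in[i_0,i_1]$ with $H^x_{(k,i')}=h>0$ and $H^x_{(k,i)}=0$ for all $i\in[i_0,i_1]\setminus\{i'\}$. If $S$ is the union of a $k$-ordered family of $2^l$ $k$-fractal sets, with $l\ge4h$, then $$\mathbb{P}^{\xi^x,\xi^y}_p\big[\mathcal{R}_k(S,I)\text{ does not contain a }k\text{-ordered family of }2^{l-4h}\ k\text{-fractal sets}\big]\le L^5\big(\max\{u_k(p),v_k(p)\}\big)^2.$$
   Context: $L=10^6$, $L_k=L^k$, $M_k=\{k\}\times\mathbb{Z}$, $I_{(k,i)}=[iL_k,(i+1)L_k)\cap\mathbb{Z}$; for $m=(k+1,i)$, $\mathcal{Q}_m=\{(k,iL+j):0\le j\le L-1\}$. For a sequence $\xi=(\xi_i)$ of nonnegative integers define $H_m$: $H_{(0,i)}=\xi_i$; for $m\in M_{k+1}$, $H_m=0$ if all $m'\in\mathcal{Q}_m$ are good, $H_m=H_{m_1}-1$ if $m_1$ is the unique bad element of $\mathcal{Q}_m$, $H_m=1+\sum_{i=1}^rH_{m_i}$ if $m_1,\dots,m_r$ ($r\ge2$) are the bad elements; $m$ is good iff $H_m=0$. $H^x_m,H^y_m$ are computed from $\xi^x,\xi^y$; $I^x_m,I^y_m$ denote $I_m$ viewed horizontally/vertically. $\mathbb{P}^{\xi^x,\xi^y}_p$: independent bond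 percolation on $\mathbb{Z}^2$, $\{(i,j),(i+1,j)\}$ open with probability $p^{\xi^x_i+1}$, $\{(i,j),(i,j+1)\}$ open with probability $p^{\xi^y_j+1}$. $Z_k(S)=\{m\in M_k:I_m\cap S\ne\emptyset\}$; $Z\prec Z'$ means $(k,i)\in Z,(k,j)\in Z'\Rightarrow i<j$; $S_1,\dots,S_n$ is $k$-ordered if $Z_k(S_1)\prec\dots\prec Z_k(S_n)$. $S$ is $k$-good if all $m\in Z_k(S)$ have $H^y_m=0$. $\{i\}$ is $0$-fractal iff $\xi^y_i=0$; for $k\ge1$, $S$ is $k$-fractal if $S=S_1\cup\dots\cup S_{2^{10}}$, $S$ $k$-good, $(S_i)$ $(k-1)$-ordered, each $S_i$ $(k-1)$-fractal. $k$-grouped: $S\subseteq I_m$ for some $m\in M_k$. A set $A$ "contains a $k$-ordered family of $N$ $k$-fractal sets" if there are $S'_1,\dots,S'_N\subseteq A$, each $k$-fractal, forming a $k$-ordered family. For a rectangle $R=[a,b)\times[c,d)$ (vertices $[a,b]\times[c,d]\cap\mathbb{Z}^2$, edges $\{z,w\}$, $|z-w|=1$, $z\in[a,b]\times[c,d]$, $w\in[a,b)\times[c,d)$), $\mathcal{R}(S,R)$ = set of $y$ with $(b,y)\in\{b\}\times[c,d]$ joined to $\{a\}\times S$ by an open path in $R$. For a finite interval $I=[a,b)$, $\mathcal{R}_k(S,I)=\bigcup_{m'\in Z_k(S)}\mathcal{R}(S\cap I^y_{m'},I\times I^y_{m'})$. $u_k(p)=\sup\mathbb{P}^{\xi^x,\xi^y}_p[\mathcal{R}_k(S,I^x_m)$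 contains no $k$-grouped $k$-fractal set$]$ over $S,m\in M_k,\xi^x,\xi^y$ with $S$ $k$-fractal and $H^x_m=0$. $v_k(p)=\sup\mathbb{P}^{\xi^x,\xi^y}_p[\mathcal{R}_k(S,I^x_m)$ contains no $k$-fractal set$]$ over $h\ge1,S,m\in M_k,\xi^x,\xi^y$ with $H^x_m=h$ and $S$ the union of a $k$-ordered family of $2^{4(h-1)}$ $k$-fractal sets. *)

theory Defs
  imports "HOL-Probability.Probability"
begin

text \<open>The scale constant L = 10^6; blocks M_k = {k} x Z are indexed by (k, i).\<close>
definition Lc :: int where "Lc = 10^6"

definition Ik :: "nat \<Rightarrow> int \<Rightarrow> int set" where
  "Ik k i = {i * Lc ^ k ..< (i + 1) * Lc ^ k}"

text \<open>H_m for m = (k,i), computed from a sequence xi of nonnegative integers.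
  Q_(k+1,i) = {(k, i L + j) : 0 <= j <= L-1}; bad children are those with H <> 0.\<close>
primrec H :: "(int \<Rightarrow> nat) \<Rightarrow> nat \<Rightarrow> int \<Rightarrow> nat" where
  "H \<xi> 0 i = \<xi> i"
| "H \<xi> (Suc k) i =
     (if {j \<in> {0..<Lc}. H \<xi> k (i * Lc + j) \<noteq> 0} = {} then 0
      else if card {j \<in> {0..<Lc}. H \<xi> k (i * Lc + j) \<noteq> 0} = 1
      then H \<xi> k (i * Lc + the_elem {j \<in> {0..<Lc}. H \<xi> k (i * Lc + j) \<noteq> 0}) - 1
      else 1 + (\<Sum>j\<in>{j \<in> {0..<Lc}. H \<xi> k (i * Lc + j) \<noteq> 0}. H \<xi> k (i * Lc + j)))"

definition good :: "(int \<Rightarrow> nat) \<Rightarrow> nat \<Rightarrow> int \<Rightarrow> bool" where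
  "good \<xi> k i \<longleftrightarrow> H \<xi> k i = 0"

definition Zk :: "nat \<Rightarrow> int set \<Rightarrow> int set" where
  "Zk k S = {i. Ik k i \<inter> S \<noteq> {}}"

definition precZ :: "int set \<Rightarrow> int set \<Rightarrow> bool" where
  "precZ Z Z' \<longleftrightarrow> (\<forall>i\<in>Z. \<forall>j\<in>Z'. i < j)"

definition k_ordered :: "nat \<Rightarrow> int set list \<Rightarrow> bool" where
  "k_ordered k Ss \<longleftrightarrow>
     (\<forall>a b. a < b \<and> b < length Ss \<longrightarrow> precZ (Zk k (Ss ! a)) (Zk k (Ss ! b)))"

definition k_good :: "(int \<Rightarrow> nat) \<Rightarrow> nat \<Rightarrow> int set \<Rightarrow> bool" where
  "k_good \<xi>y k S \<longleftrightarrow> (\<forall>m\<in>Zk k S. H \<xi>y k m = 0)"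

primrec fractal :: "(int \<Rightarrow> nat) \<Rightarrow> nat \<Rightarrow> int set \<Rightarrow> bool" where
  "fractal \<xi>y 0 S = (\<exists>i. S = {i} \<and> \<xi>y i = 0)"
| "fractal \<xi>y (Suc k) S =
     (\<exists>Ss. length Ss = 2 ^ 10 \<and> S = \<Union>(set Ss) \<and> k_good \<xi>y (Suc k) S \<and>
           k_ordered k Ss \<and> (\<forall>T\<in>set Ss. fractal \<xi>y k T))"

definition grouped :: "nat \<Rightarrow> int set \<Rightarrow> bool" where
  "grouped k S \<longleftrightarrow> (\<exists>i. S \<subseteq> Ik k i)"

definition contains_family :: "(int \<Rightarrow> nat) \<Rightarrow> nat \<Rightarrow> nat \<Rightarrow> int set \<Rightarrow> bool" where
  "contains_family \<xi>y k N A \<longleftrightarrow>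
     (\<exists>Ss. length Ss = N \<and> (\<forall>T\<in>set Ss. T \<subseteq> A \<and> fractal \<xi>y k T) \<and> k_ordered k Ss)"

text \<open>Edges of Z^2: ((x,y),True) is {(x,y),(x+1,y)} (horizontal),
  ((x,y),False) is {(x,y),(x,y+1)} (vertical).\<close>
type_synonym edge = "(int \<times> int) \<times> bool"

fun ends :: "edge \<Rightarrow> (int \<times> int) set" where
  "ends ((x, y), True) = {(x, y), (x + 1, y)}"
| "ends ((x, y), False) = {(x, y), (x, y + 1)}"

fun edge_prob :: "real \<Rightarrow> (int \<Rightarrow> nat) \<Rightarrow> (int \<Rightarrow> nat) \<Rightarrow> edge \<Rightarrow> real" where
  "edge_prob p \<xi>x \<xi>y ((x, y), True) = p ^ (\<xi>x x + 1)"
| "edge_prob p \<xi>x \<xi>y ((x, y), False) = p ^ (\<xi>y y + 1)"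

text \<open>Independent bond percolation: configurations are maps edge => bool (True = open).\<close>
definition perc :: "real \<Rightarrow> (int \<Rightarrow> nat) \<Rightarrow> (int \<Rightarrow> nat) \<Rightarrow> (edge \<Rightarrow> bool) measure" where
  "perc p \<xi>x \<xi>y = (\<Pi>\<^sub>M e\<in>UNIV. measure_pmf (bernoulli_pmf (edge_prob p \<xi>x \<xi>y e)))"

definition Pr :: "real \<Rightarrow> (int \<Rightarrow> nat) \<Rightarrow> (int \<Rightarrow> nat) \<Rightarrow> ((edge \<Rightarrow> bool) \<Rightarrow> bool) \<Rightarrow> real" where
  "Pr p \<xi>x \<xi>y A = measure (perc p \<xi>x \<xi>y) {\<omega> \<in> space (perc p \<xi>x \<xi>y). A \<omega>}"

text \<open>Rectangle R = [a,b) x [c,d): vertices [a,b] x [c,d]; edges {z,w} with |z-w|=1,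
  z in [a,b] x [c,d], w in [a,b) x [c,d).\<close>
definition edge_in_rect :: "int \<Rightarrow> int \<Rightarrow> int \<Rightarrow> int \<Rightarrow> edge \<Rightarrow> bool" where
  "edge_in_rect a b c d e \<longleftrightarrow>
     (\<exists>z w. ends e = {z, w} \<and>
        a \<le> fst z \<and> fst z \<le> b \<and> c \<le> snd z \<and> snd z \<le> d \<and>
        a \<le> fst w \<and> fst w < b \<and> c \<le> snd w \<and> snd w < d)"

definition open_adj :: "(edge \<Rightarrow> bool) \<Rightarrow> int \<Rightarrow> int \<Rightarrow> int \<Rightarrow> int \<Rightarrow> int \<times> int \<Rightarrow> int \<times> int \<Rightarrow> bool" where
  "open_adj \<omega> a b c d u v \<longleftrightarrow> (\<exists>e. edge_in_rect a b c d e \<and> \<omega> e \<and> ends e = {u, v})"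

definition Rreach :: "(edge \<Rightarrow> bool) \<Rightarrow> int \<Rightarrow> int \<Rightarrow> int \<Rightarrow> int \<Rightarrow> int set \<Rightarrow> int set" where
  "Rreach \<omega> a b c d S =
     {y. c \<le> y \<and> y \<le> d \<and> (\<exists>s\<in>S. (open_adj \<omega> a b c d)\<^sup>*\<^sup>* (a, s) (b, y))}"

definition Rk :: "(edge \<Rightarrow> bool) \<Rightarrow> nat \<Rightarrow> int set \<Rightarrow> int \<Rightarrow> int \<Rightarrow> int set" where
  "Rk \<omega> k S a b =
     (\<Union>m\<in>Zk k S. Rreach \<omega> a b (m * Lc ^ k) ((m + 1) * Lc ^ k) (S \<inter> Ik k m))"

definition u :: "nat \<Rightarrow> real \<Rightarrow> real" where
  "u k p = Sup {Pr p \<xi>x \<xi>y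
       (\<lambda>\<omega>. \<not> (\<exists>T. T \<subseteq> Rk \<omega> k S (m * Lc ^ k) ((m + 1) * Lc ^ k) \<and> grouped k T \<and> fractal \<xi>y k T))
     | S m \<xi>x \<xi>y. fractal \<xi>y k S \<and> H \<xi>x k m = 0}"

definition v :: "nat \<Rightarrow> real \<Rightarrow> real" where
  "v k p = Sup {Pr p \<xi>x \<xi>y
       (\<lambda>\<omega>. \<not> (\<exists>T. T \<subseteq> Rk \<omega> k S (m * Lc ^ k) ((m + 1) * Lc ^ k) \<and> fractal \<xi>y k T))
     | h S m \<xi>x \<xi>y Ss. h \<ge> 1 \<and> H \<xi>x k m = h \<and> length Ss = 2 ^ (4 * (h - 1)) \<and>
         k_ordered k Ss \<and> (\<forall>T\<in>set Ss. fractal \<xi>y k T) \<and> S = \<Union>(set Ss)}"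

end

theory Submission
  imports Defs
begin


lemma Lk_pos: "(0::int) < Lc ^ k" by (simp add: Lc_def)

lemma div_iff_int: "(0::int) < L \<Longrightarrow> (s div L = i) \<longleftrightarrow> (i * L \<le> s \<and> s < (i+1)*L)"
proof
  assume L: "0 < L" and e: "s div L = i"
  have "s = (s div L) * L + s mod L" by simp
  moreover have "0 \<le> s mod L" "s mod L < L" using L by auto
  ultimately show "i * L \<le> s \<and> s < (i+1)*L" using e by (auto simp: algebra_simps)
next
  assume L: "0 < L" and h: "i * L \<le> s \<and> s < (i+1)*L"
  define r where "r = s - i * L"
  have r: "0 \<le> r" "r < L" using h by (auto simp: r_def algebra_simps)
  have "s = r + i * L" by (simp add: r_def)
  then have "s div L = r div L + i" using L by simp
  also have "r div L = 0" using r by simp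
  finally show "s div L = i" by simp
qed

lemma Ik_iff: "s \<in> Ik k i \<longleftrightarrow> s div Lc ^ k = i"
  unfolding Ik_def using div_iff_int[OF Lk_pos[of k], of s i] by auto

lemma Zk_eq: "Zk k S = (\<lambda>s. s div Lc ^ k) ` S"
  unfolding Zk_def using Ik_iff by auto

lemma Zk_finite: "finite S \<Longrightarrow> finite (Zk k S)"
  by (simp add: Zk_eq)

lemma Zk_mono: "S \<subseteq> S' \<Longrightarrow> Zk k S \<subseteq> Zk k S'"
  by (auto simp: Zk_eq)

lemma Zk_Union: "Zk k (\<Union>A) = (\<Union>T\<in>A. Zk k T)"
  by (auto simp: Zk_eq)

lemma fractal_finite: "fractal \<xi>y k T \<Longrightarrow> finite T"
proof (induction k arbitrary: T)
  case 0 then show ?case by auto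
next
  case (Suc k) then show ?case by auto
qed

lemma edge_in_rect_pos:
  assumes "edge_in_rect a b c d e"
  shows "a \<le> fst (fst e) \<and> fst (fst e) < b \<and> c \<le> snd (fst e) \<and> snd (fst e) < d"
proof -
  obtain x y t where e: "e = ((x,y),t)" by (metis prod.collapse)
  from assms obtain z w where zw: "ends e = {z, w}"
    "a \<le> fst z" "fst z \<le> b" "c \<le> snd z" "snd z \<le> d"
    "a \<le> fst w" "fst w < b" "c \<le> snd w" "snd w < d"
    unfolding edge_in_rect_def by blast
  show ?thesis
  proof (cases t)
    case True
    then have "{(x,y),(x+1,y)} = {z,w}" using zw(1) e by simp
    then show ?thesis using zw e by (auto simp: doubleton_eq_iff)
  next
    case False
    then have "{(x,y),(x,y+1)} = {z,w}" using zw(1) e by simp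
    then show ?thesis using zw e by (auto simp: doubleton_eq_iff)
  qed
qed

lemma ends_share: "z \<in> ends e \<Longrightarrow> w \<in> ends e \<Longrightarrow> fst z = fst w \<or> snd z = snd w"
proof -
  obtain x y t where e: "e = ((x,y),t)" by (metis prod.collapse)
  assume "z \<in> ends e" "w \<in> ends e"
  then show ?thesis using e by (cases t) auto
qed

lemma reach_inv:
  assumes "(open_adj \<omega> a b c d)\<^sup>*\<^sup>* q1 q2" "snd q1 < d \<or> fst q1 < b"
  shows "snd q2 < d \<or> fst q2 < b"
  using assms
proof (induction rule: rtranclp_induct)
  case base then show ?case by simp
next
  case (step y z)
  from step(2) obtain e where e: "edge_in_rect a b c d e" "ends e = {y, z}"
    unfolding open_adj_def by blast
  from e(1) obtain z' w' where zw: "ends e = {z', w'}"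
    "a \<le> fst w'" "fst w' < b" "c \<le> snd w'" "snd w' < d"
    unfolding edge_in_rect_def by blast
  have zin: "z \<in> ends e" "y \<in> ends e" using e by auto
  show ?case
  proof (cases "z = w'")
    case True then show ?thesis using zw by simp
  next
    case False
    have "w' \<in> ends e" using zw by simp
    from ends_share[OF zin(1) this] show ?thesis using zw by auto
  qed
qed

lemma Rreach_sub:
  assumes "\<forall>s\<in>S. s < d"
  shows "Rreach \<omega> a b c d S \<subseteq> {c..<d}"
proof
  fix y assume "y \<in> Rreach \<omega> a b c d S"
  then obtain s where s: "s \<in> S" "c \<le> y" "y \<le> d" "(open_adj \<omega> a b c d)\<^sup>*\<^sup>* (a, s) (b, y)"
    unfolding Rreach_def by blast
  have "s < d" using assms s(1) by blast
  then have "snd (b, y) < d \<or> fst (b, y) < b" using reach_inv[OF s(4)] by simp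
  then have "y < d" by simp
  then show "y \<in> {c..<d}" using s by auto
qed

lemma Rk_memD:
  assumes "y \<in> Rk \<omega> k S a b"
  shows "\<exists>m\<in>Zk k S. y \<in> Ik k m \<and> y \<in> Rreach \<omega> a b (m * Lc ^ k) ((m + 1) * Lc ^ k) (S \<inter> Ik k m)"
proof -
  from assms obtain m where m: "m \<in> Zk k S" "y \<in> Rreach \<omega> a b (m * Lc ^ k) ((m + 1) * Lc ^ k) (S \<inter> Ik k m)"
    unfolding Rk_def by blast
  have "\<forall>s\<in>S \<inter> Ik k m. s < (m + 1) * Lc ^ k" by (auto simp: Ik_def)
  from Rreach_sub[OF this, of \<omega> a b "m * Lc ^ k"] m(2) have "y \<in> {m * Lc ^ k..<(m + 1) * Lc ^ k}" by blast
  then have "y \<in> Ik k m" by (simp add: Ik_def)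
  then show ?thesis using m by blast
qed

lemma Ik_same_Zk: "y \<in> Ik k i \<Longrightarrow> m \<in> Zk k S \<Longrightarrow> y \<in> Ik k m \<Longrightarrow> i \<in> Zk k S"
  unfolding Ik_iff by blast

lemma Zk_Rk: "Zk k (Rk \<omega> k S a b) \<subseteq> Zk k S"
proof
  fix i assume "i \<in> Zk k (Rk \<omega> k S a b)"
  then obtain y where y: "y \<in> Rk \<omega> k S a b" "y \<in> Ik k i" unfolding Zk_def by blast
  from Rk_memD[OF y(1)] obtain m where "m \<in> Zk k S" "y \<in> Ik k m" by blast
  with y(2) show "i \<in> Zk k S" by (rule Ik_same_Zk)
qed

lemma Zk_sub_Rk: "T \<subseteq> Rk \<omega> k S a b \<Longrightarrow> Zk k T \<subseteq> Zk k S"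
  by (rule order_trans[OF Zk_mono Zk_Rk])

definition conn :: "(edge \<Rightarrow> bool) \<Rightarrow> int \<Rightarrow> int \<Rightarrow> int \<Rightarrow> int \<Rightarrow> int \<Rightarrow> int \<Rightarrow> bool" where
  "conn \<omega> a b c d s y \<longleftrightarrow> (open_adj \<omega> a b c d)\<^sup>*\<^sup>* (a, s) (b, y)"

lemma Rreach_iff: "y \<in> Rreach \<omega> a b c d S \<longleftrightarrow> c \<le> y \<and> y \<le> d \<and> (\<exists>s\<in>S. conn \<omega> a b c d s y)"
  unfolding Rreach_def conn_def by simp

lemma Rreach_mono: "S \<subseteq> S' \<Longrightarrow> Rreach \<omega> a b c d S \<subseteq> Rreach \<omega> a b c d S'"
  unfolding Rreach_iff subset_iff by blast

lemma Rk_mono: "S \<subseteq> S' \<Longrightarrow> Rk \<omega> k S a b \<subseteq> Rk \<omega> k S' a b"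
proof -
  assume "S \<subseteq> S'"
  then have "Zk k S \<subseteq> Zk k S'" "\<And>m. S \<inter> Ik k m \<subseteq> S' \<inter> Ik k m" using Zk_mono by blast+
  then have z: "Zk k S \<subseteq> Zk k S'" and i: "\<And>m. S \<inter> Ik k m \<subseteq> S' \<inter> Ik k m" by blast+
  show ?thesis unfolding Rk_def by (rule UN_mono[OF z]) (rule Rreach_mono[OF i])
qed

lemma open_adj_mono:
  assumes "a' \<le> a" "b \<le> b'" "open_adj \<omega> a b c d q1 q2"
  shows "open_adj \<omega> a' b' c d q1 q2"
proof -
  from assms(3) obtain e z w where e: "ends e = {q1, q2}" "\<omega> e" "ends e = {z, w}"
        "a \<le> fst z" "fst z \<le> b" "c \<le> snd z" "snd z \<le> d"
        "a \<le> fst w" "fst w < b" "c \<le> snd w" "snd w < d"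
    unfolding open_adj_def edge_in_rect_def by blast
  have "edge_in_rect a' b' c d e"
    unfolding edge_in_rect_def using e assms(1,2) by (intro exI[of _ z] exI[of _ w]) auto
  then show ?thesis unfolding open_adj_def using e by blast
qed

lemma reach_mono:
  assumes "a' \<le> a" "b \<le> b'" "(open_adj \<omega> a b c d)\<^sup>*\<^sup>* q1 q2"
  shows "(open_adj \<omega> a' b' c d)\<^sup>*\<^sup>* q1 q2"
proof -
  have le: "open_adj \<omega> a b c d \<le> open_adj \<omega> a' b' c d"
    using open_adj_mono[OF assms(1,2)] by (simp add: le_fun_def)
  show ?thesis by (rule predicate2D[OF rtranclp_mono[OF le] assms(3)])
qed

lemma Rk_comp:
  assumes ab: "a \<le> b" and bc: "b \<le> c"
  shows "Rk \<omega> k (Rk \<omega> k S a b) b c \<subseteq> Rk \<omega> k S a c"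
proof
  fix y assume "y \<in> Rk \<omega> k (Rk \<omega> k S a b) b c"
  then obtain m where m: "m \<in> Zk k (Rk \<omega> k S a b)"
    "y \<in> Rreach \<omega> b c (m * Lc ^ k) ((m + 1) * Lc ^ k) (Rk \<omega> k S a b \<inter> Ik k m)"
    unfolding Rk_def by blast
  from m(2) have "m * Lc ^ k \<le> y \<and> y \<le> (m + 1) * Lc ^ k \<and> (\<exists>s'\<in>Rk \<omega> k S a b \<inter> Ik k m.
     (open_adj \<omega> b c (m * Lc ^ k) ((m + 1) * Lc ^ k))\<^sup>*\<^sup>* (b, s') (c, y))"
    unfolding Rreach_def by simp
  then obtain s' where s': "s' \<in> Rk \<omega> k S a b" "s' \<in> Ik k m" "m * Lc ^ k \<le> y" "y \<le> (m + 1) * Lc ^ k"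
    "(open_adj \<omega> b c (m * Lc ^ k) ((m + 1) * Lc ^ k))\<^sup>*\<^sup>* (b, s') (c, y)"
    by blast
  from Rk_memD[OF s'(1)] obtain m' where m': "m' \<in> Zk k S" "s' \<in> Ik k m'"
    "s' \<in> Rreach \<omega> a b (m' * Lc ^ k) ((m' + 1) * Lc ^ k) (S \<inter> Ik k m')" by blast
  have "m' = m" using m'(2) s'(2) by (simp add: Ik_iff)
  with m'(3) have "\<exists>s\<in>S \<inter> Ik k m.
    (open_adj \<omega> a b (m * Lc ^ k) ((m + 1) * Lc ^ k))\<^sup>*\<^sup>* (a, s) (b, s')"
    unfolding Rreach_def by simp
  then obtain s where s: "s \<in> S \<inter> Ik k m"
    "(open_adj \<omega> a b (m * Lc ^ k) ((m + 1) * Lc ^ k))\<^sup>*\<^sup>* (a, s) (b, s')"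
    by blast
  have p1: "(open_adj \<omega> a c (m * Lc ^ k) ((m + 1) * Lc ^ k))\<^sup>*\<^sup>* (a, s) (b, s')"
    by (rule reach_mono[OF order_refl bc s(2)])
  have p2: "(open_adj \<omega> a c (m * Lc ^ k) ((m + 1) * Lc ^ k))\<^sup>*\<^sup>* (b, s') (c, y)"
    by (rule reach_mono[OF ab order_refl s'(5)])
  have "(open_adj \<omega> a c (m * Lc ^ k) ((m + 1) * Lc ^ k))\<^sup>*\<^sup>* (a, s) (c, y)"
    using p1 p2 by (rule rtranclp_trans)
  then have "y \<in> Rreach \<omega> a c (m * Lc ^ k) ((m + 1) * Lc ^ k) (S \<inter> Ik k m)"
    unfolding Rreach_def using s s'(3,4) by blast
  then show "y \<in> Rk \<omega> k S a c" unfolding Rk_def using m'(1) \<open>m' = m\<close> by blast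
qed

lemma Rk_refl: "S \<subseteq> Rk \<omega> k S a a"
proof
  fix y assume y: "y \<in> S"
  define m where "m = y div Lc ^ k"
  have ym: "y \<in> Ik k m" by (simp add: Ik_iff m_def)
  then have "m \<in> Zk k S" using y unfolding Zk_def by blast
  moreover have "y \<in> Rreach \<omega> a a (m * Lc ^ k) ((m + 1) * Lc ^ k) (S \<inter> Ik k m)"
    using ym y unfolding Rreach_def by (auto simp: Ik_def)
  ultimately show "y \<in> Rk \<omega> k S a a" unfolding Rk_def by blast
qed

definition ebox :: "nat \<Rightarrow> int set \<Rightarrow> int \<Rightarrow> int \<Rightarrow> edge set" where
  "ebox k S a b = {e. a \<le> fst (fst e) \<and> fst (fst e) < b \<and> snd (fst e) div Lc ^ k \<in> Zk k S}"

lemma Rk_dep: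
  assumes "\<forall>e\<in>ebox k S a b. \<omega> e = \<omega>' e"
  shows "Rk \<omega> k S a b = Rk \<omega>' k S a b"
proof -
  have adj: "open_adj \<omega> a b (m * Lc ^ k) ((m + 1) * Lc ^ k) = open_adj \<omega>' a b (m * Lc ^ k) ((m + 1) * Lc ^ k)"
    if m: "m \<in> Zk k S" for m
  proof -
    have "\<omega> e = \<omega>' e" if "edge_in_rect a b (m * Lc ^ k) ((m + 1) * Lc ^ k) e" for e
    proof -
      from edge_in_rect_pos[OF that] have "snd (fst e) \<in> Ik k m" "a \<le> fst (fst e)" "fst (fst e) < b"
        by (auto simp: Ik_def)
      then have "e \<in> ebox k S a b" using m by (auto simp: ebox_def Ik_iff)
      then show ?thesis using assms by blast
    qed
    then show ?thesis unfolding open_adj_def by (intro ext) blast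
  qed
  show ?thesis unfolding Rk_def Rreach_def using adj by (intro SUP_cong refl) simp
qed

lemma ebox_finite: "finite (Zk k S) \<Longrightarrow> finite (ebox k S a b)"
proof -
  assume f: "finite (Zk k S)"
  have "ebox k S a b \<subseteq> ({a..<b} \<times> (\<Union>m\<in>Zk k S. Ik k m)) \<times> UNIV"
    by (auto simp: ebox_def Ik_iff)
  moreover have "finite (({a..<b} \<times> (\<Union>m\<in>Zk k S. Ik k m)) \<times> (UNIV :: bool set))"
    using f by (auto simp: Ik_def)
  ultimately show ?thesis by (rule finite_subset)
qed

lemma ebox_disj_cols: "b \<le> a' \<Longrightarrow> ebox k S a b \<inter> ebox k S' a' b' = {}"
  by (auto simp: ebox_def)

lemma ebox_disj_rows: "Zk k S \<inter> Zk k S' = {} \<Longrightarrow> ebox k S a b \<inter> ebox k S' a' b' = {}"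
  by (auto simp: ebox_def)

lemma ebox_mono: "Zk k S \<subseteq> Zk k S' \<Longrightarrow> ebox k S a b \<subseteq> ebox k S' a b"
  by (auto simp: ebox_def)



abbreviation Mb :: "real \<Rightarrow> (int \<Rightarrow> nat) \<Rightarrow> (int \<Rightarrow> nat) \<Rightarrow> edge \<Rightarrow> bool measure" where
  "Mb p \<xi>x \<xi>y e \<equiv> measure_pmf (bernoulli_pmf (edge_prob p \<xi>x \<xi>y e))"

definition dep :: "edge set \<Rightarrow> ((edge \<Rightarrow> bool) \<Rightarrow> bool) \<Rightarrow> bool" where
  "dep E A \<longleftrightarrow> (\<forall>\<omega> \<omega>'. (\<forall>e\<in>E. \<omega> e = \<omega>' e) \<longrightarrow> A \<omega> = A \<omega>')"

lemma dep_restrict: "dep E A \<Longrightarrow> A (restrict \<omega> E) = A \<omega>"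
  unfolding dep_def by auto

lemma perc_prob: "prob_space (perc p \<xi>x \<xi>y)"
  unfolding perc_def by (rule prob_space_PiM) (rule prob_space_measure_pmf)

lemma perc_space: "space (perc p \<xi>x \<xi>y) = UNIV"
  unfolding perc_def by (simp add: space_PiM)

lemma coord_indep: "prob_space.indep_vars (perc p \<xi>x \<xi>y) (Mb p \<xi>x \<xi>y) (\<lambda>e \<omega>. \<omega> e) UNIV"
proof -
  interpret prob_space "perc p \<xi>x \<xi>y" by (rule perc_prob)
  have rv: "\<And>e. random_variable (Mb p \<xi>x \<xi>y e) (\<lambda>\<omega>. \<omega> e)"
    unfolding perc_def by (rule measurable_component_singleton) simp
  have c: "\<And>e. distr (perc p \<xi>x \<xi>y) (Mb p \<xi>x \<xi>y e) (\<lambda>\<omega>. \<omega> e) = Mb p \<xi>x \<xi>y e"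
    unfolding perc_def by (rule distr_PiM_component) (simp_all add: prob_space_measure_pmf)
  have r: "(\<lambda>x. \<lambda>i\<in>UNIV. x i) = (\<lambda>x::edge \<Rightarrow> bool. x)" by (simp add: restrict_UNIV)
  have "distr (perc p \<xi>x \<xi>y) (PiM UNIV (Mb p \<xi>x \<xi>y)) (\<lambda>x. \<lambda>i\<in>UNIV. x i) = perc p \<xi>x \<xi>y"
    unfolding r by (rule distr_id2) (simp only: perc_def)
  also have "perc p \<xi>x \<xi>y = PiM UNIV (\<lambda>e. distr (perc p \<xi>x \<xi>y) (Mb p \<xi>x \<xi>y e) (\<lambda>\<omega>. \<omega> e))"
    by (simp only: c) (simp only: perc_def)
  finally show ?thesis
    by (subst indep_vars_iff_distr_eq_PiM[OF _ rv]) simp_all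
qed


lemma finite_PiM_sets:
  assumes K: "finite K" and X: "X \<subseteq> space (PiM K (Mb p \<xi>x \<xi>y))"
  shows "X \<in> sets (PiM K (Mb p \<xi>x \<xi>y))"
proof -
  have sp: "space (PiM K (Mb p \<xi>x \<xi>y)) = PiE K (\<lambda>_. UNIV)" by (simp add: space_PiM)
  have "finite (PiE K (\<lambda>_. UNIV::bool set))" by (rule finite_PiE) (use K in auto)
  then have fin: "finite X" using X unfolding sp by (rule finite_subset[rotated])
  have single: "PiE K (\<lambda>i. {c i}) = {c}" if "c \<in> X" for c
  proof -
    have "c \<in> extensional K" using that X sp by (auto simp: PiE_def)
    then have ce: "c \<in> extensional K" .
    show ?thesis
    proof (intro equalityI subsetI)
      fix x assume x: "x \<in> PiE K (\<lambda>i. {c i})"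
      have "x i = c i" for i
      proof (cases "i \<in> K")
        case True then show ?thesis using x by (auto simp: PiE_iff)
      next
        case False
        have xe: "x \<in> extensional K" using x by (simp add: PiE_def)
        show ?thesis using extensional_arb[OF xe False] extensional_arb[OF ce False] by simp
      qed
      then have "x = c" by (simp add: fun_eq_iff)
      then show "x \<in> {c}" by simp
    next
      fix x assume "x \<in> {c}" then have "x = c" by simp
      then show "x \<in> PiE K (\<lambda>i. {c i})" using ce by (simp add: PiE_def Pi_def)
    qed
  qed
  have "X = (\<Union>c\<in>X. PiE K (\<lambda>i. {c i}))" using single by auto
  also have "\<dots> \<in> sets (PiM K (Mb p \<xi>x \<xi>y))"
    using fin K by (intro sets.finite_UN sets_PiM_I_finite) auto
  finally show ?thesis .
qed

lemma dep_sets: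
  assumes "finite K" "dep K A"
  shows "{\<omega> \<in> space (perc p \<xi>x \<xi>y). A \<omega>} \<in> sets (perc p \<xi>x \<xi>y)"
proof -
  let ?X = "{c \<in> space (PiM K (Mb p \<xi>x \<xi>y)). A c}"
  have m: "(\<lambda>\<omega>. restrict \<omega> K) \<in> measurable (perc p \<xi>x \<xi>y) (PiM K (Mb p \<xi>x \<xi>y))"
    unfolding perc_def by (rule measurable_restrict_subset) simp
  have X: "?X \<in> sets (PiM K (Mb p \<xi>x \<xi>y))" by (rule finite_PiM_sets[OF assms(1)]) auto
  have "{\<omega> \<in> space (perc p \<xi>x \<xi>y). A \<omega>} = (\<lambda>\<omega>. restrict \<omega> K) -` ?X \<inter> space (perc p \<xi>x \<xi>y)"
    using dep_restrict[OF assms(2)] by (auto simp: space_PiM perc_space)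
  also have "\<dots> \<in> sets (perc p \<xi>x \<xi>y)" by (rule measurable_sets[OF m X])
  finally show ?thesis .
qed

lemma Pr_def2: "Pr p \<xi>x \<xi>y A = measure (perc p \<xi>x \<xi>y) {\<omega>. A \<omega>}"
  unfolding Pr_def perc_space by simp

lemma Pr_nonneg: "0 \<le> Pr p \<xi>x \<xi>y A"
  unfolding Pr_def by simp

lemma Pr_le1: "Pr p \<xi>x \<xi>y A \<le> 1"
proof -
  interpret prob_space "perc p \<xi>x \<xi>y" by (rule perc_prob)
  show ?thesis unfolding Pr_def by simp
qed

lemma Pr_False: "Pr p \<xi>x \<xi>y (\<lambda>_. False) = 0"
  unfolding Pr_def by simp

lemma Pr_mono:
  assumes "\<And>\<omega>. A \<omega> \<Longrightarrow> B \<omega>" "finite K" "dep K B"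
  shows "Pr p \<xi>x \<xi>y A \<le> Pr p \<xi>x \<xi>y B"
proof -
  interpret prob_space "perc p \<xi>x \<xi>y" by (rule perc_prob)
  show ?thesis unfolding Pr_def
    by (rule finite_measure_mono) (use assms dep_sets[where p=p and \<xi>x=\<xi>x and \<xi>y=\<xi>y, OF assms(2,3)] in auto)
qed

lemma Pr_union:
  assumes "finite K1" "dep K1 A" "finite K2" "dep K2 B"
  shows "Pr p \<xi>x \<xi>y (\<lambda>\<omega>. A \<omega> \<or> B \<omega>) \<le> Pr p \<xi>x \<xi>y A + Pr p \<xi>x \<xi>y B"
proof -
  interpret prob_space "perc p \<xi>x \<xi>y" by (rule perc_prob)
  have "{\<omega> \<in> space (perc p \<xi>x \<xi>y). A \<omega> \<or> B \<omega>} =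
    {\<omega> \<in> space (perc p \<xi>x \<xi>y). A \<omega>} \<union> {\<omega> \<in> space (perc p \<xi>x \<xi>y). B \<omega>}" by auto
  then show ?thesis unfolding Pr_def
    using measure_Un_le[OF dep_sets[where p=p and \<xi>x=\<xi>x and \<xi>y=\<xi>y, OF assms(1,2)] dep_sets[where p=p and \<xi>x=\<xi>x and \<xi>y=\<xi>y, OF assms(3,4)]] by simp
qed

lemma dep_mono: "dep K A \<Longrightarrow> K \<subseteq> K' \<Longrightarrow> dep K' A"
  unfolding dep_def by blast

lemma indep_events:
  assumes G: "finite G" and disj: "disjoint_family_on K G"
    and K: "\<And>g. g \<in> G \<Longrightarrow> finite (K g)" and A: "\<And>g. g \<in> G \<Longrightarrow> dep (K g) (A g)"
  shows "Pr p \<xi>x \<xi>y (\<lambda>\<omega>. \<forall>g\<in>G. A g \<omega>) = (\<Prod>g\<in>G. Pr p \<xi>x \<xi>y (A g))"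
proof (cases "G = {}")
  case True
  interpret prob_space "perc p \<xi>x \<xi>y" by (rule perc_prob)
  show ?thesis using True unfolding Pr_def by (simp add: prob_space)
next
  case False
  interpret prob_space "perc p \<xi>x \<xi>y" by (rule perc_prob)
  have ind: "indep_vars (\<lambda>j. PiM (K j) (Mb p \<xi>x \<xi>y)) (\<lambda>j \<omega>. restrict (\<lambda>i. \<omega> i) (K j)) G"
    by (rule indep_vars_restrict[OF coord_indep]) (use disj in auto)
  let ?X = "\<lambda>g. {c \<in> space (PiM (K g) (Mb p \<xi>x \<xi>y)). A g c}"
  have X: "\<And>g. g \<in> G \<Longrightarrow> ?X g \<in> sets (PiM (K g) (Mb p \<xi>x \<xi>y))"
    by (rule finite_PiM_sets[OF K]) auto
  have pre: "(\<lambda>\<omega>. restrict (\<lambda>i. \<omega> i) (K g)) -` ?X g \<inter> space (perc p \<xi>x \<xi>y) = {\<omega> \<in> space (perc p \<xi>x \<xi>y). A g \<omega>}"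
    if "g \<in> G" for g
    using dep_restrict[OF A[OF that]] by (auto simp: space_PiM perc_space)
  have "prob (\<Inter>g\<in>G. (\<lambda>\<omega>. restrict (\<lambda>i. \<omega> i) (K g)) -` ?X g \<inter> space (perc p \<xi>x \<xi>y)) =
      (\<Prod>g\<in>G. prob ((\<lambda>\<omega>. restrict (\<lambda>i. \<omega> i) (K g)) -` ?X g \<inter> space (perc p \<xi>x \<xi>y)))"
    by (rule indep_varsD[OF ind False G order_refl X])
  moreover have "(\<Inter>g\<in>G. (\<lambda>\<omega>. restrict (\<lambda>i. \<omega> i) (K g)) -` ?X g \<inter> space (perc p \<xi>x \<xi>y)) =
      {\<omega> \<in> space (perc p \<xi>x \<xi>y). \<forall>g\<in>G. A g \<omega>}"
    using pre False by auto
  ultimately show ?thesis unfolding Pr_def using pre by simp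
qed



lemma indep2:
  assumes "finite K1" "finite K2" "K1 \<inter> K2 = {}" "dep K1 A" "dep K2 B"
  shows "Pr p \<xi>x \<xi>y (\<lambda>\<omega>. A \<omega> \<and> B \<omega>) = Pr p \<xi>x \<xi>y A * Pr p \<xi>x \<xi>y B"
proof -
  let ?K = "\<lambda>g::bool. if g then K1 else K2"
  let ?A = "\<lambda>g::bool. if g then A else B"
  have d: "disjoint_family_on ?K UNIV" using assms(3) by (auto simp: disjoint_family_on_def)
  have "Pr p \<xi>x \<xi>y (\<lambda>\<omega>. \<forall>g\<in>UNIV. ?A g \<omega>) = (\<Prod>g\<in>UNIV. Pr p \<xi>x \<xi>y (?A g))"
    by (rule indep_events[OF _ d]) (use assms in auto)
  moreover have "(\<lambda>\<omega>. \<forall>g\<in>UNIV. ?A g \<omega>) = (\<lambda>\<omega>. A \<omega> \<and> B \<omega>)" by (auto simp: UNIV_bool)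
  moreover have "(\<Prod>g\<in>UNIV. Pr p \<xi>x \<xi>y (?A g)) = Pr p \<xi>x \<xi>y A * Pr p \<xi>x \<xi>y B"
    by (simp add: UNIV_bool)
  ultimately show ?thesis by simp
qed

lemma dep_restrict_eq: "dep E1 (\<lambda>\<omega>. restrict \<omega> E1 = c)"
  unfolding dep_def by (auto simp: restrict_def fun_eq_iff)

lemma cond_bound:
  assumes E1: "finite E1"
    and E2: "\<And>c. c \<in> PiE E1 (\<lambda>_. UNIV) \<Longrightarrow> finite (E2 c)"
    and D: "\<And>c. c \<in> PiE E1 (\<lambda>_. UNIV) \<Longrightarrow> E2 c \<inter> E1 = {}"
    and B: "\<And>c. c \<in> PiE E1 (\<lambda>_. UNIV) \<Longrightarrow> dep (E2 c) (B c)"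
    and b: "\<And>c. c \<in> PiE E1 (\<lambda>_. UNIV) \<Longrightarrow> Pr p \<xi>x \<xi>y (B c) \<le> \<beta>"
  shows "Pr p \<xi>x \<xi>y (\<lambda>\<omega>. B (restrict \<omega> E1) \<omega>) \<le> \<beta>"
proof -
  interpret prob_space "perc p \<xi>x \<xi>y" by (rule perc_prob)
  let ?C = "PiE E1 (\<lambda>_. UNIV::bool set)"
  have C: "finite ?C" using E1 by (intro finite_PiE) auto
  let ?Z = "\<lambda>c. {\<omega>. restrict \<omega> E1 = c \<and> B c \<omega>}"
  let ?Y = "\<lambda>c. {\<omega>. restrict \<omega> E1 = c}"
  have dZ: "dep (E1 \<union> E2 c) (\<lambda>\<omega>. restrict \<omega> E1 = c \<and> B c \<omega>)" if "c \<in> ?C" for c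
    using dep_restrict_eq[of E1 c] B[OF that] unfolding dep_def by blast
  have sZ: "?Z c \<in> sets (perc p \<xi>x \<xi>y)" if "c \<in> ?C" for c
    using dep_sets[where p=p and \<xi>x=\<xi>x and \<xi>y=\<xi>y, OF _ dZ[OF that]] E1 E2[OF that] by (simp add: perc_space)
  have sY: "?Y c \<in> sets (perc p \<xi>x \<xi>y)" for c
    using dep_sets[where p=p and \<xi>x=\<xi>x and \<xi>y=\<xi>y, OF E1 dep_restrict_eq[of E1 c]] by (simp add: perc_space)
  have eq: "{\<omega>. B (restrict \<omega> E1) \<omega>} = (\<Union>c\<in>?C. ?Z c)" by auto
  have dj: "disjoint_family_on ?Z ?C" by (auto simp: disjoint_family_on_def)
  have djY: "disjoint_family_on ?Y ?C" by (auto simp: disjoint_family_on_def)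
  have "measure (perc p \<xi>x \<xi>y) {\<omega>. B (restrict \<omega> E1) \<omega>} = (\<Sum>c\<in>?C. measure (perc p \<xi>x \<xi>y) (?Z c))"
    unfolding eq by (rule finite_measure_finite_Union[OF C _ dj]) (use sZ in blast)
  also have "\<dots> = (\<Sum>c\<in>?C. measure (perc p \<xi>x \<xi>y) (?Y c) * Pr p \<xi>x \<xi>y (B c))"
  proof (rule sum.cong[OF refl])
    fix c assume c: "c \<in> ?C"
    have "Pr p \<xi>x \<xi>y (\<lambda>\<omega>. restrict \<omega> E1 = c \<and> B c \<omega>) = Pr p \<xi>x \<xi>y (\<lambda>\<omega>. restrict \<omega> E1 = c) * Pr p \<xi>x \<xi>y (B c)"
      by (rule indep2[OF E1 E2[OF c] _ dep_restrict_eq B[OF c]]) (use D[OF c] in blast)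
    then show "measure (perc p \<xi>x \<xi>y) (?Z c) = measure (perc p \<xi>x \<xi>y) (?Y c) * Pr p \<xi>x \<xi>y (B c)"
      by (simp add: Pr_def2)
  qed
  also have "\<dots> \<le> (\<Sum>c\<in>?C. measure (perc p \<xi>x \<xi>y) (?Y c) * \<beta>)"
    by (rule sum_mono) (use b in \<open>auto intro: mult_left_mono\<close>)
  also have "\<dots> = measure (perc p \<xi>x \<xi>y) (\<Union>c\<in>?C. ?Y c) * \<beta>"
    by (subst finite_measure_finite_Union[OF C _ djY]) (use sY in \<open>auto simp: sum_distrib_right\<close>)
  also have "\<dots> \<le> 1 * \<beta>"
  proof (rule mult_right_mono)
    show "measure (perc p \<xi>x \<xi>y) (\<Union>c\<in>?C. ?Y c) \<le> 1" by simp
    have c0: "restrict (\<lambda>_. True) E1 \<in> ?C" by auto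
    show "0 \<le> \<beta>" using b[OF c0] Pr_nonneg[of p \<xi>x \<xi>y] by (rule order_trans[rotated])
  qed
  finally show ?thesis by (simp add: Pr_def2)
qed

lemma cond_dep:
  assumes E1: "finite E1"
    and B: "\<And>c. c \<in> PiE E1 (\<lambda>_. UNIV) \<Longrightarrow> dep (E2 c) (B c)"
  shows "dep (E1 \<union> (\<Union>c\<in>PiE E1 (\<lambda>_. UNIV). E2 c)) (\<lambda>\<omega>. B (restrict \<omega> E1) \<omega>)"
  unfolding dep_def
proof (intro allI impI)
  fix \<omega> \<omega>' :: "edge \<Rightarrow> bool"
  assume h: "\<forall>e\<in>E1 \<union> (\<Union>c\<in>PiE E1 (\<lambda>_. UNIV). E2 c). \<omega> e = \<omega>' e"
  have r: "restrict \<omega> E1 = restrict \<omega>' E1" using h by (auto simp: restrict_def fun_eq_iff)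
  have c: "restrict \<omega> E1 \<in> PiE E1 (\<lambda>_. UNIV)" by auto
  have "\<forall>e\<in>E2 (restrict \<omega> E1). \<omega> e = \<omega>' e" using h c by blast
  then have "B (restrict \<omega> E1) \<omega> = B (restrict \<omega> E1) \<omega>'" using B[OF c] unfolding dep_def by blast
  then show "B (restrict \<omega> E1) \<omega> = B (restrict \<omega>' E1) \<omega>'" using r by simp
qed

lemma cond_finite:
  assumes E1: "finite E1" and E2: "\<And>c. c \<in> PiE E1 (\<lambda>_. UNIV) \<Longrightarrow> finite (E2 c)"
  shows "finite (E1 \<union> (\<Union>c\<in>PiE E1 (\<lambda>_. UNIV::bool set). E2 c))"
  using E1 E2 by (auto intro!: finite_PiE)

lemma many_dep:
  assumes "\<And>g. g \<in> G \<Longrightarrow> dep (K g) (A g)"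
  shows "dep (\<Union>g\<in>G. K g) (\<lambda>\<omega>. r \<le> card {g\<in>G. A g \<omega>})"
proof -
  have "{g\<in>G. A g \<omega>} = {g\<in>G. A g \<omega>'}" if h: "\<forall>e\<in>(\<Union>g\<in>G. K g). \<omega> e = \<omega>' e" for \<omega> \<omega>'
  proof -
    have "A g \<omega> = A g \<omega>'" if g: "g \<in> G" for g
    proof -
      have "\<forall>e\<in>K g. \<omega> e = \<omega>' e" using h g by blast
      then show ?thesis using assms[OF g] unfolding dep_def by blast
    qed
    then show ?thesis by auto
  qed
  then show ?thesis unfolding dep_def by (intro allI impI) (simp only:)
qed

lemma many_events:
  assumes G: "finite G" and disj: "disjoint_family_on K G"
    and K: "\<And>g. g \<in> G \<Longrightarrow> finite (K g)" and A: "\<And>g. g \<in> G \<Longrightarrow> dep (K g) (A g)"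
    and b: "\<And>g. g \<in> G \<Longrightarrow> Pr p \<xi>x \<xi>y (A g) \<le> \<beta>" and b0: "0 \<le> \<beta>"
  shows "Pr p \<xi>x \<xi>y (\<lambda>\<omega>. r \<le> card {g\<in>G. A g \<omega>}) \<le> 2 ^ card G * \<beta> ^ r"
proof -
  interpret prob_space "perc p \<xi>x \<xi>y" by (rule perc_prob)
  let ?RR = "{R. R \<subseteq> G \<and> card R = r}"
  let ?F = "\<lambda>R. {\<omega>. \<forall>g\<in>R. A g \<omega>}"
  have RRfin: "finite ?RR" using G by (rule finite_subset[rotated, OF finite_Pow_iff[THEN iffD2]]) auto
  have sub: "{\<omega>. r \<le> card {g\<in>G. A g \<omega>}} \<subseteq> (\<Union>R\<in>?RR. ?F R)"
  proof
    fix \<omega> assume "\<omega> \<in> {\<omega>. r \<le> card {g\<in>G. A g \<omega>}}"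
    then have "r \<le> card {g\<in>G. A g \<omega>}" by simp
    then obtain R where R: "R \<subseteq> {g\<in>G. A g \<omega>}" "card R = r" by (rule obtain_subset_with_card_n)
    have "R \<in> ?RR" using R by auto
    moreover have "\<omega> \<in> ?F R" using R(1) by auto
    ultimately show "\<omega> \<in> (\<Union>R\<in>?RR. ?F R)" by (rule UN_I)
  qed
  have depF: "dep (\<Union>g\<in>R. K g) (\<lambda>\<omega>. \<forall>g\<in>R. A g \<omega>)" if "R \<in> ?RR" for R
  proof -
    have RG: "R \<subseteq> G" using that by simp
    have "(\<forall>g\<in>R. A g \<omega>) = (\<forall>g\<in>R. A g \<omega>')" if h: "\<forall>e\<in>(\<Union>g\<in>R. K g). \<omega> e = \<omega>' e" for \<omega> \<omega>'
    proof -
      have "A g \<omega> = A g \<omega>'" if g: "g \<in> R" for g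
      proof -
        have "\<forall>e\<in>K g. \<omega> e = \<omega>' e" using h g by blast
        then show ?thesis using A[of g] g RG unfolding dep_def by blast
      qed
      then show ?thesis by auto
    qed
    then show ?thesis unfolding dep_def by (intro allI impI) (simp only:)
  qed
  have sF: "?F R \<in> sets (perc p \<xi>x \<xi>y)" if "R \<in> ?RR" for R
  proof -
    have "finite R" using that G finite_subset by blast
    then have "finite (\<Union>g\<in>R. K g)" using that K by blast
    from dep_sets[where p=p and \<xi>x=\<xi>x and \<xi>y=\<xi>y, OF this depF[OF that]] show ?thesis by (simp add: perc_space)
  qed
  have pF: "measure (perc p \<xi>x \<xi>y) (?F R) \<le> \<beta> ^ r" if R: "R \<in> ?RR" for R
  proof -
    have fR: "finite R" using R G finite_subset by blast
    have "measure (perc p \<xi>x \<xi>y) (?F R) = (\<Prod>g\<in>R. Pr p \<xi>x \<xi>y (A g))"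
      using indep_events[OF fR disjoint_family_on_mono[OF _ disj], of A p \<xi>x \<xi>y] R K A
      by (auto simp: Pr_def2)
    also have "\<dots> \<le> (\<Prod>g\<in>R. \<beta>)"
      by (rule prod_mono) (use R b Pr_nonneg in auto)
    also have "\<dots> = \<beta> ^ r" using R by simp
    finally show ?thesis .
  qed
  have "measure (perc p \<xi>x \<xi>y) {\<omega>. r \<le> card {g\<in>G. A g \<omega>}} \<le> measure (perc p \<xi>x \<xi>y) (\<Union>R\<in>?RR. ?F R)"
    by (rule finite_measure_mono[OF sub]) (use RRfin sF in blast)
  also have "\<dots> \<le> (\<Sum>R\<in>?RR. measure (perc p \<xi>x \<xi>y) (?F R))"
    by (rule measure_UNION_le[OF RRfin sF])
  also have "\<dots> \<le> (\<Sum>R\<in>?RR. \<beta> ^ r)" by (rule sum_mono) (rule pF)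
  also have "\<dots> = card ?RR * \<beta> ^ r" by simp
  also have "\<dots> \<le> 2 ^ card G * \<beta> ^ r"
  proof (rule mult_right_mono)
    have "card ?RR \<le> card (Pow G)" using G by (intro card_mono) auto
    then show "real (card ?RR) \<le> 2 ^ card G" using card_Pow[OF G]
      by (metis of_nat_le_iff of_nat_numeral of_nat_power)
    show "0 \<le> \<beta> ^ r" using b0 by simp
  qed
  finally show ?thesis by (simp add: Pr_def2)
qed



definition NF :: "(int \<Rightarrow> nat) \<Rightarrow> nat \<Rightarrow> (edge \<Rightarrow> bool) \<Rightarrow> int set \<Rightarrow> int \<Rightarrow> int \<Rightarrow> bool" where
  "NF \<xi>y k \<omega> X a b \<longleftrightarrow> \<not> (\<exists>T. T \<subseteq> Rk \<omega> k X a b \<and> fractal \<xi>y k T)"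

lemma dep_Rk: "dep (ebox k X a b) (\<lambda>\<omega>. \<Phi> (Rk \<omega> k X a b))"
  unfolding dep_def using Rk_dep by metis

lemma dep_NF: "dep (ebox k X a b) (\<lambda>\<omega>. NF \<xi>y k \<omega> X a b)"
  unfolding NF_def by (rule dep_Rk)

lemma dep_or: "dep K1 A \<Longrightarrow> dep K2 B \<Longrightarrow> dep (K1 \<union> K2) (\<lambda>\<omega>. A \<omega> \<or> B \<omega>)"
  unfolding dep_def by (metis UnCI)

lemma dep_const: "dep {} (\<lambda>\<omega>. P)"
  unfolding dep_def by simp

lemma ebox_finite': "finite X \<Longrightarrow> finite (ebox k X a b)"
  by (intro ebox_finite Zk_finite)

lemma u_bound:
  assumes "fractal \<xi>y k T" "H \<xi>x k m = 0"
  shows "Pr p \<xi>x \<xi>y (\<lambda>\<omega>. \<not> (\<exists>W. W \<subseteq> Rk \<omega> k T (m * Lc ^ k) ((m + 1) * Lc ^ k) \<and> grouped k W \<and> fractal \<xi>y k W)) \<le> u k p"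
  unfolding u_def
proof (rule cSup_upper)
  show "Pr p \<xi>x \<xi>y (\<lambda>\<omega>. \<not> (\<exists>W. W \<subseteq> Rk \<omega> k T (m * Lc ^ k) ((m + 1) * Lc ^ k) \<and> grouped k W \<and> fractal \<xi>y k W))
    \<in> {Pr p \<xi>x \<xi>y (\<lambda>\<omega>. \<not> (\<exists>T. T \<subseteq> Rk \<omega> k S (m * Lc ^ k) ((m + 1) * Lc ^ k) \<and> grouped k T \<and> fractal \<xi>y k T)) |
       S m \<xi>x \<xi>y. fractal \<xi>y k S \<and> H \<xi>x k m = 0}"
    using assms by blast
  show "bdd_above {Pr p \<xi>x \<xi>y (\<lambda>\<omega>. \<not> (\<exists>T. T \<subseteq> Rk \<omega> k S (m * Lc ^ k) ((m + 1) * Lc ^ k) \<and> grouped k T \<and> fractal \<xi>y k T)) |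
       S m \<xi>x \<xi>y. fractal \<xi>y k S \<and> H \<xi>x k m = 0}"
    by (rule bdd_aboveI[where M=1]) (auto simp: Pr_le1)
qed

lemma v_bound:
  assumes "h \<ge> 1" "H \<xi>x k m = h" "length Fs = 2 ^ (4 * (h - 1))" "k_ordered k Fs"
    "\<forall>T\<in>set Fs. fractal \<xi>y k T" "X = \<Union>(set Fs)"
  shows "Pr p \<xi>x \<xi>y (\<lambda>\<omega>. NF \<xi>y k \<omega> X (m * Lc ^ k) ((m + 1) * Lc ^ k)) \<le> v k p"
  unfolding v_def NF_def
proof (rule cSup_upper)
  show "Pr p \<xi>x \<xi>y (\<lambda>\<omega>. \<not> (\<exists>T. T \<subseteq> Rk \<omega> k X (m * Lc ^ k) ((m + 1) * Lc ^ k) \<and> fractal \<xi>y k T))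
    \<in> {Pr p \<xi>x \<xi>y (\<lambda>\<omega>. \<not> (\<exists>T. T \<subseteq> Rk \<omega> k S (m * Lc ^ k) ((m + 1) * Lc ^ k) \<and> fractal \<xi>y k T)) |
       h S m \<xi>x \<xi>y Ss. h \<ge> 1 \<and> H \<xi>x k m = h \<and> length Ss = 2 ^ (4 * (h - 1)) \<and>
         k_ordered k Ss \<and> (\<forall>T\<in>set Ss. fractal \<xi>y k T) \<and> S = \<Union>(set Ss)}"
    using assms by blast
  show "bdd_above {Pr p \<xi>x \<xi>y (\<lambda>\<omega>. \<not> (\<exists>T. T \<subseteq> Rk \<omega> k S (m * Lc ^ k) ((m + 1) * Lc ^ k) \<and> fractal \<xi>y k T)) |
       h S m \<xi>x \<xi>y Ss. h \<ge> 1 \<and> H \<xi>x k m = h \<and> length Ss = 2 ^ (4 * (h - 1)) \<and>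
         k_ordered k Ss \<and> (\<forall>T\<in>set Ss. fractal \<xi>y k T) \<and> S = \<Union>(set Ss)}"
    by (rule bdd_aboveI[where M=1]) (auto simp: Pr_le1)
qed

lemma chain_step:
  assumes X: "finite X" and am: "a \<le> m * Lc ^ k" and Hm: "H \<xi>x k m = 0" and u0: "0 \<le> u k p"
  shows "Pr p \<xi>x \<xi>y (\<lambda>\<omega>. NF \<xi>y k \<omega> X a ((m + 1) * Lc ^ k))
     \<le> Pr p \<xi>x \<xi>y (\<lambda>\<omega>. NF \<xi>y k \<omega> X a (m * Lc ^ k)) + u k p"
proof -
  define b where "b = m * Lc ^ k"
  define b' where "b' = (m + 1) * Lc ^ k"
  have bb': "b \<le> b'" using Lk_pos[of k] by (simp add: b_def b'_def algebra_simps)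
  define E1 where "E1 = ebox k X a b"
  have E1f: "finite E1" unfolding E1_def using X by (rule ebox_finite')
  define Tc where "Tc c = (SOME T. T \<subseteq> Rk c k X a b \<and> fractal \<xi>y k T)" for c
  define Bc where "Bc c \<omega> = (\<not> NF \<xi>y k c X a b \<and> NF \<xi>y k \<omega> (Tc c) b b')" for c \<omega>
  define E2 where "E2 c = (if \<not> NF \<xi>y k c X a b then ebox k (Tc c) b b' else {})" for c
  have Tc: "Tc c \<subseteq> Rk c k X a b \<and> fractal \<xi>y k (Tc c)" if "\<not> NF \<xi>y k c X a b" for c
    using that unfolding NF_def Tc_def by (metis (mono_tags, lifting) someI_ex)
  have E2f: "finite (E2 c)" for c
  proof (cases "NF \<xi>y k c X a b")
    case True then show ?thesis by (simp add: E2_def)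
  next
    case False then have "finite (Tc c)" using Tc fractal_finite by blast
    then show ?thesis using False by (simp add: E2_def ebox_finite')
  qed
  have E2d: "E2 c \<inter> E1 = {}" for c
    unfolding E2_def E1_def using ebox_disj_cols[where b=b and a'=b and S=X and a=a and S'="Tc c" and b'=b' and k=k] by auto
  have Bd: "dep (E2 c) (Bc c)" for c
  proof (cases "NF \<xi>y k c X a b")
    case True
    then have "Bc c = (\<lambda>\<omega>. False)" unfolding Bc_def by simp
    then show ?thesis using True dep_const[of False] by (simp add: E2_def)
  next
    case False
    then have "Bc c = (\<lambda>\<omega>. NF \<xi>y k \<omega> (Tc c) b b')" unfolding Bc_def by (simp add: fun_eq_iff)
    then show ?thesis using False dep_NF by (simp add: E2_def)
  qed
  have Bp: "Pr p \<xi>x \<xi>y (Bc c) \<le> u k p" for c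
  proof (cases "NF \<xi>y k c X a b")
    case True
    then have "Bc c = (\<lambda>\<omega>. False)" unfolding Bc_def by simp
    then show ?thesis using u0 by (simp add: Pr_False)
  next
    case False
    then have "Bc c = (\<lambda>\<omega>. NF \<xi>y k \<omega> (Tc c) b b')" unfolding Bc_def by (simp add: fun_eq_iff)
    then have "Pr p \<xi>x \<xi>y (Bc c) = Pr p \<xi>x \<xi>y (\<lambda>\<omega>. NF \<xi>y k \<omega> (Tc c) b b')" by simp
    also have "\<dots> \<le> Pr p \<xi>x \<xi>y (\<lambda>\<omega>. \<not> (\<exists>W. W \<subseteq> Rk \<omega> k (Tc c) (m * Lc ^ k) ((m + 1) * Lc ^ k) \<and> grouped k W \<and> fractal \<xi>y k W))"
    proof (rule Pr_mono)
      show "\<And>\<omega>. NF \<xi>y k \<omega> (Tc c) b b' \<Longrightarrow> \<not> (\<exists>W. W \<subseteq> Rk \<omega> k (Tc c) (m * Lc ^ k) ((m + 1) * Lc ^ k) \<and> grouped k W \<and> fractal \<xi>y k W)"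
        unfolding NF_def b_def b'_def by blast
      show "finite (ebox k (Tc c) b b')" using Tc[OF False] fractal_finite ebox_finite' by blast
      show "dep (ebox k (Tc c) b b') (\<lambda>\<omega>. \<not> (\<exists>W. W \<subseteq> Rk \<omega> k (Tc c) (m * Lc ^ k) ((m + 1) * Lc ^ k) \<and> grouped k W \<and> fractal \<xi>y k W))"
        unfolding b_def b'_def by (rule dep_Rk)
    qed
    also have "\<dots> \<le> u k p" using Tc[OF False] Hm by (intro u_bound) auto
    finally show ?thesis .
  qed
  have incl: "NF \<xi>y k \<omega> X a b \<or> Bc (restrict \<omega> E1) \<omega>" if nf: "NF \<xi>y k \<omega> X a b'" for \<omega>
  proof (cases "NF \<xi>y k \<omega> X a b")
    case True then show ?thesis by simp
  next
    case False note n = False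
    let ?c = "restrict \<omega> E1"
    have eqR: "Rk ?c k X a b = Rk \<omega> k X a b"
      by (rule Rk_dep) (simp add: E1_def)
    have n': "\<not> NF \<xi>y k ?c X a b" using n unfolding NF_def eqR .
    have "NF \<xi>y k \<omega> (Tc ?c) b b'"
      unfolding NF_def
    proof
      assume "\<exists>T. T \<subseteq> Rk \<omega> k (Tc ?c) b b' \<and> fractal \<xi>y k T"
      then obtain W where W: "W \<subseteq> Rk \<omega> k (Tc ?c) b b'" "fractal \<xi>y k W" by blast
      have "Tc ?c \<subseteq> Rk \<omega> k X a b" using Tc[OF n'] eqR by simp
      then have "Rk \<omega> k (Tc ?c) b b' \<subseteq> Rk \<omega> k (Rk \<omega> k X a b) b b'" by (rule Rk_mono)
      also have "\<dots> \<subseteq> Rk \<omega> k X a b'" by (rule Rk_comp) (use am bb' in \<open>simp_all add: b_def\<close>)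
      finally have "W \<subseteq> Rk \<omega> k X a b'" using W(1) by blast
      then show False using nf W(2) unfolding NF_def by blast
    qed
    then have "Bc ?c \<omega>" unfolding Bc_def using n' by simp
    then show ?thesis by simp
  qed
  let ?Kall = "E1 \<union> (\<Union>c\<in>PiE E1 (\<lambda>_. UNIV). E2 c)"
  have dB: "dep ?Kall (\<lambda>\<omega>. Bc (restrict \<omega> E1) \<omega>)" by (rule cond_dep[OF E1f Bd])
  have fB: "finite ?Kall" by (rule cond_finite[OF E1f E2f])
  have fN: "finite (ebox k X a b)" using X by (rule ebox_finite')
  have "Pr p \<xi>x \<xi>y (\<lambda>\<omega>. NF \<xi>y k \<omega> X a b') \<le> Pr p \<xi>x \<xi>y (\<lambda>\<omega>. NF \<xi>y k \<omega> X a b \<or> Bc (restrict \<omega> E1) \<omega>)"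
  proof (rule Pr_mono)
    show "\<And>\<omega>. NF \<xi>y k \<omega> X a b' \<Longrightarrow> NF \<xi>y k \<omega> X a b \<or> Bc (restrict \<omega> E1) \<omega>" by (rule incl)
    show "finite (ebox k X a b \<union> ?Kall)" by (rule finite_UnI[OF fN fB])
    show "dep (ebox k X a b \<union> ?Kall) (\<lambda>\<omega>. NF \<xi>y k \<omega> X a b \<or> Bc (restrict \<omega> E1) \<omega>)"
      by (rule dep_or[OF dep_NF dB])
  qed
  also have "\<dots> \<le> Pr p \<xi>x \<xi>y (\<lambda>\<omega>. NF \<xi>y k \<omega> X a b) + Pr p \<xi>x \<xi>y (\<lambda>\<omega>. Bc (restrict \<omega> E1) \<omega>)"
    by (rule Pr_union[OF fN dep_NF fB dB])
  also have "Pr p \<xi>x \<xi>y (\<lambda>\<omega>. Bc (restrict \<omega> E1) \<omega>) \<le> u k p"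
    by (rule cond_bound[OF E1f E2f E2d Bd Bp])
  finally show ?thesis by (simp add: b_def b'_def)
qed

lemma chain:
  assumes X: "finite X" and am: "a \<le> m0 * Lc ^ k" and Hm: "\<forall>t<n. H \<xi>x k (m0 + int t) = 0" and u0: "0 \<le> u k p"
  shows "Pr p \<xi>x \<xi>y (\<lambda>\<omega>. NF \<xi>y k \<omega> X a ((m0 + int n) * Lc ^ k))
     \<le> Pr p \<xi>x \<xi>y (\<lambda>\<omega>. NF \<xi>y k \<omega> X a (m0 * Lc ^ k)) + real n * u k p"
  using Hm
proof (induction n)
  case 0 then show ?case by simp
next
  case (Suc n)
  have IH: "Pr p \<xi>x \<xi>y (\<lambda>\<omega>. NF \<xi>y k \<omega> X a ((m0 + int n) * Lc ^ k))
     \<le> Pr p \<xi>x \<xi>y (\<lambda>\<omega>. NF \<xi>y k \<omega> X a (m0 * Lc ^ k)) + real n * u k p"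
    using Suc by auto
  have a2: "a \<le> (m0 + int n) * Lc ^ k"
    using am Lk_pos[of k] by (smt (verit) mult_right_mono of_nat_0_le_iff)
  have H2: "H \<xi>x k (m0 + int n) = 0" using Suc.prems by simp
  have "Pr p \<xi>x \<xi>y (\<lambda>\<omega>. NF \<xi>y k \<omega> X a ((m0 + int n + 1) * Lc ^ k))
     \<le> Pr p \<xi>x \<xi>y (\<lambda>\<omega>. NF \<xi>y k \<omega> X a ((m0 + int n) * Lc ^ k)) + u k p"
    by (rule chain_step[OF X a2 H2 u0])
  then show ?case using IH by (simp add: algebra_simps)
qed



lemma H_zero: "H (\<lambda>_. 0) k m = 0"
  by (induction k arbitrary: m) auto

lemma k_ordered_nth: "k_ordered k Ss \<Longrightarrow> i < j \<Longrightarrow> j < length Ss \<Longrightarrow> precZ (Zk k (Ss ! i)) (Zk k (Ss ! j))"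
  by (simp add: k_ordered_def)

lemma precZ_disj: "precZ A B \<Longrightarrow> A \<inter> B = {}"
  by (auto simp: precZ_def)

lemma precZ_mono: "precZ A B \<Longrightarrow> A' \<subseteq> A \<Longrightarrow> B' \<subseteq> B \<Longrightarrow> precZ A' B'"
  by (auto simp: precZ_def)

lemma precZ_UN: "(\<And>x y. x \<in> I \<Longrightarrow> y \<in> I' \<Longrightarrow> precZ (f x) (g y)) \<Longrightarrow> precZ (\<Union>x\<in>I. f x) (\<Union>y\<in>I'. g y)"
  by (auto simp: precZ_def)

lemma k_ordered_take: "k_ordered k Ss \<Longrightarrow> k_ordered k (take n Ss)"
  by (auto simp: k_ordered_def)

lemma sl_less: "finite A \<Longrightarrow> i < j \<Longrightarrow> j < card A \<Longrightarrow> sorted_list_of_set A ! i < sorted_list_of_set A ! j"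
  using sorted_wrt_nth_less[OF strict_sorted_list_of_set[of A], of i j] by simp

lemma sl_mem: "finite A \<Longrightarrow> i < card A \<Longrightarrow> sorted_list_of_set A ! i \<in> A"
  using nth_mem[of i "sorted_list_of_set A"] by simp

lemma numeric:
  fixes \<gamma> :: real
  assumes g0: "0 \<le> \<gamma>" and g1: "4 * \<gamma> \<le> 1" and q: "2 \<le> q" and N: "1 \<le> N"
  shows "2 ^ (2 * q) * \<gamma> ^ q + 2 ^ (8 * N) * \<gamma> ^ (7 * N + 1) \<le> 272 * \<gamma> ^ 2"
proof -
  have a: "(2::real) ^ (2 * q) * \<gamma> ^ q = (4 * \<gamma>) ^ q"
    by (simp add: power_mult power_mult_distrib)
  have "(4 * \<gamma>) ^ q \<le> (4 * \<gamma>) ^ 2" by (rule power_decreasing[OF q]) (use g0 g1 in auto)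
  also have "\<dots> = 16 * \<gamma> ^ 2" by (simp add: power2_eq_square)
  finally have A: "(2::real) ^ (2 * q) * \<gamma> ^ q \<le> 16 * \<gamma> ^ 2" unfolding a .
  have b: "(2::real) ^ (8 * N) * \<gamma> ^ (7 * N + 1) = \<gamma> * (256 * \<gamma> ^ 7) ^ N"
  proof -
    have e1: "(2::real) ^ (8 * N) = 256 ^ N" by (simp add: power_mult)
    have e2: "\<gamma> ^ (7 * N + 1) = \<gamma> * (\<gamma> ^ 7) ^ N" by (simp add: power_mult[symmetric] mult.commute)
    show ?thesis unfolding e1 e2 power_mult_distrib by (simp add: algebra_simps)
  qed
  have g7: "\<gamma> ^ 7 \<le> (1/4) ^ 7" by (rule power_mono) (use g0 g1 in auto)
  have c1: "256 * \<gamma> ^ 7 \<le> 1" using g7 by (simp add: power_divide)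
  have "(256 * \<gamma> ^ 7) ^ N \<le> (256 * \<gamma> ^ 7) ^ 1" by (rule power_decreasing[OF N]) (use g0 c1 in auto)
  then have "\<gamma> * (256 * \<gamma> ^ 7) ^ N \<le> \<gamma> * (256 * \<gamma> ^ 7)" using g0 by (simp add: mult_left_mono)
  also have "\<dots> = 256 * \<gamma> ^ 8" by (simp add: power_Suc[symmetric] algebra_simps del: power_Suc)
  also have "\<gamma> ^ 8 \<le> \<gamma> ^ 2" by (rule power_decreasing) (use g0 g1 in auto)
  finally have B: "(2::real) ^ (8 * N) * \<gamma> ^ (7 * N + 1) \<le> 256 * \<gamma> ^ 2" unfolding b by simp
  show ?thesis using A B by simp
qed



theorem lemma5p5:
  fixes k h l :: nat and p :: real and \<xi>x \<xi>y :: "int \<Rightarrow> nat"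
    and i0 i1 i' :: int and S :: "int set" and Ss :: "int set list"
  assumes "0 \<le> p" "p \<le> 1"
    and "0 \<le> i1 - i0" "i1 - i0 \<le> Lc - 1"
    and "i0 \<le> i'" "i' \<le> i1"
    and "H \<xi>x k i' = h" "h > 0"
    and "\<forall>i\<in>{i0..i1} - {i'}. H \<xi>x k i = 0"
    and "length Ss = 2 ^ l" "k_ordered k Ss" "\<forall>T\<in>set Ss. fractal \<xi>y k T"
    and "S = \<Union>(set Ss)"
    and "l \<ge> 4 * h"
  shows "Pr p \<xi>x \<xi>y
           (\<lambda>\<omega>. \<not> contains_family \<xi>y k (2 ^ (l - 4 * h)) (Rk \<omega> k S (i0 * Lc ^ k) ((i1 + 1) * Lc ^ k)))
         \<le> real_of_int Lc ^ 5 * (max (u k p) (v k p)) ^ 2"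
proof -
  note i01 = assms(3,4) and ii = assms(5,6) and Hh = assms(7,8) and Hz = assms(9)
  note lenSs0 = assms(10) and ord = assms(11) and fracSs = assms(12) and Sdef = assms(13) and lh = assms(14)
  have Lk0: "0 < Lc ^ k" by (rule Lk_pos)
  define a where "a = i0 * Lc ^ k"
  define b where "b = i' * Lc ^ k"
  define e where "e = (i1 + 1) * Lc ^ k"
  have ab: "a \<le> b" unfolding a_def b_def using ii Lk0 by (simp add: mult_right_mono)
  have be: "b \<le> e" unfolding b_def e_def using ii Lk0 by (simp add: mult_right_mono)
  have b_b1: "b \<le> (i' + 1) * Lc ^ k" unfolding b_def using Lk0 by (simp add: algebra_simps)
  define n where "n = (2::nat) ^ l"
  define B where "B = (2::nat) ^ (4 * (h - 1))"
  define N where "N = (2::nat) ^ (l - 4 * h)"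
  define q where "q = (2::nat) ^ (l - 1)"
  have h1: "1 \<le> h" using Hh by simp
  have l4: "4 \<le> l" using lh h1 by simp
  have nq: "n = 2 * q" unfolding n_def q_def using l4
    by (metis Suc_diff_1 not_numeral_le_zero not_gr_zero power_Suc zero_less_iff_neq_zero)
  have qBN: "q = 8 * B * N"
  proof -
    have el: "l - 1 = 3 + 4 * (h - 1) + (l - 4 * h)" using lh h1 by simp
    have "(2::nat) ^ (l - 1) = 2 ^ 3 * 2 ^ (4 * (h - 1)) * 2 ^ (l - 4 * h)"
      unfolding el power_add by (rule refl)
    then show ?thesis unfolding q_def B_def N_def by simp
  qed
  have N1: "1 \<le> N" unfolding N_def by simp
  have B1: "1 \<le> B" unfolding B_def by simp
  have "(2::nat) ^ 1 \<le> 2 ^ (l - 1)" by (rule power_increasing) (use l4 in simp_all)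
  then have q2: "2 \<le> q" unfolding q_def by simp
  have "B * 1 \<le> B * (8 * N)" by (rule mult_le_mono2) (use N1 in simp)
  then have "B \<le> q" unfolding qBN by (simp add: algebra_simps)
  then have Bq: "B \<le> n" unfolding nq by simp
  have lenSs: "length Ss = n" using lenSs0 n_def by simp
  have SjS: "Ss ! j \<subseteq> S" if "j < n" for j using that lenSs Sdef by auto
  have fracj: "fractal \<xi>y k (Ss ! j)" if "j < n" for j using that lenSs fracSs by auto
  have finj: "finite (Ss ! j)" if "j < n" for j using fracj[OF that] by (rule fractal_finite)
  have Sfin: "finite S" unfolding Sdef using fracSs fractal_finite by blast
  have n0: "0 < n" unfolding n_def by simp
  have u0: "0 \<le> u k p"
    using u_bound[OF fracj[OF n0] H_zero, of p] Pr_nonneg by (rule order_trans[rotated])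
  have v0: "0 \<le> v k p"
  proof -
    have "Pr p \<xi>x \<xi>y (\<lambda>\<omega>. NF \<xi>y k \<omega> (\<Union>(set (take B Ss))) (i' * Lc ^ k) ((i' + 1) * Lc ^ k)) \<le> v k p"
    proof (rule v_bound[OF h1 Hh(1)])
      show "length (take B Ss) = 2 ^ (4 * (h - 1))" using Bq lenSs B_def by simp
      show "k_ordered k (take B Ss)" using ord by (rule k_ordered_take)
      show "\<forall>T\<in>set (take B Ss). fractal \<xi>y k T" using fracSs by (meson in_set_takeD)
    qed simp
    then show ?thesis using Pr_nonneg by (rule order_trans[rotated])
  qed
  define M where "M = max (u k p) (v k p)"
  have M0: "0 \<le> M" using u0 unfolding M_def by simp
  have uM: "u k p \<le> M" and vM: "v k p \<le> M" unfolding M_def by simp_all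
  define \<gamma> where "\<gamma> = 10 ^ 6 * M"
  have g0: "0 \<le> \<gamma>" unfolding \<gamma>_def using M0 by simp
  have LR: "real_of_int Lc = 10 ^ 6" by (simp add: Lc_def)
  show ?thesis
  proof (cases "1 \<le> real_of_int Lc ^ 5 * M ^ 2")
    case True
    show ?thesis using order_trans[OF Pr_le1 True] unfolding M_def .
  next
    case False
    have "(4 * \<gamma>) ^ 2 < 1 ^ 2"
    proof -
      have "(4 * \<gamma>) ^ 2 = 16 * 10 ^ 12 * M ^ 2" unfolding \<gamma>_def by (simp add: power2_eq_square)
      also have "\<dots> \<le> 10 ^ 30 * M ^ 2" by (rule mult_right_mono) simp_all
      also have "\<dots> < 1" using False unfolding LR by simp
      finally show ?thesis by simp
    qed
    then have g4: "4 * \<gamma> \<le> 1" using power2_less_imp_less[of "4 * \<gamma>" 1] by simp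
    define nL where "nL = nat (i' - i0)"
    define nR where "nR = nat (i1 - i')"
    have nLe: "i0 + int nL = i'" using ii unfolding nL_def by simp
    have nRe: "i' + 1 + int nR = i1 + 1" using ii unfolding nR_def by simp
    have nLb: "real nL \<le> 10 ^ 6" using i01 ii unfolding nL_def by (simp add: Lc_def)
    have nRb: "real nR \<le> 10 ^ 6 - 1" using i01 ii unfolding nR_def by (simp add: Lc_def)
    have left: "Pr p \<xi>x \<xi>y (\<lambda>\<omega>. NF \<xi>y k \<omega> (Ss ! j) a b) \<le> \<gamma>" if j: "j < n" for j
    proof -
      have Hl: "\<forall>t<nL. H \<xi>x k (i0 + int t) = 0"
      proof (intro allI impI)
        fix t assume t: "t < nL"
        have "i0 + int t \<in> {i0..i1} - {i'}" using t nLe ii by auto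
        then show "H \<xi>x k (i0 + int t) = 0" using Hz by blast
      qed
      have "Pr p \<xi>x \<xi>y (\<lambda>\<omega>. NF \<xi>y k \<omega> (Ss ! j) a ((i0 + int nL) * Lc ^ k))
         \<le> Pr p \<xi>x \<xi>y (\<lambda>\<omega>. NF \<xi>y k \<omega> (Ss ! j) a (i0 * Lc ^ k)) + real nL * u k p"
        by (rule chain[OF finj[OF j] _ Hl u0]) (simp add: a_def)
      moreover have "(\<lambda>\<omega>. NF \<xi>y k \<omega> (Ss ! j) a (i0 * Lc ^ k)) = (\<lambda>\<omega>. False)"
        unfolding NF_def a_def[symmetric] using Rk_refl fracj[OF j] by blast
      moreover have "real nL * u k p \<le> \<gamma>" unfolding \<gamma>_def
        by (rule mult_mono[OF nLb uM]) (use u0 in simp_all)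
      ultimately show ?thesis using nLe unfolding b_def by (simp add: Pr_False)
    qed
    define E1 where "E1 = ebox k S a b"
    have E1f: "finite E1" unfolding E1_def using Sfin by (rule ebox_finite')
    define Bad1 where "Bad1 \<omega> = (q \<le> card {j\<in>{..<n}. NF \<xi>y k \<omega> (Ss ! j) a b})" for \<omega>
    have djZ: "Zk k (Ss ! j1) \<inter> Zk k (Ss ! j2) = {}" if "j1 < n" "j2 < n" "j1 \<noteq> j2" for j1 j2
    proof (cases "j1 < j2")
      case True then show ?thesis using k_ordered_nth[OF ord True] that lenSs precZ_disj by simp
    next
      case False then have j21: "j2 < j1" using that by simp
      have "precZ (Zk k (Ss ! j2)) (Zk k (Ss ! j1))" using k_ordered_nth[OF ord j21] that lenSs by simp
      then show ?thesis using precZ_disj by blast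
    qed
    have dj1: "disjoint_family_on (\<lambda>j. ebox k (Ss ! j) a b) {..<n}"
      unfolding disjoint_family_on_def
    proof (intro ballI impI)
      fix j1 j2 assume j: "j1 \<in> {..<n}" "j2 \<in> {..<n}" "j1 \<noteq> j2"
      show "ebox k (Ss ! j1) a b \<inter> ebox k (Ss ! j2) a b = {}"
        by (rule ebox_disj_rows[OF djZ]) (use j in simp_all)
    qed
    have PB1: "Pr p \<xi>x \<xi>y Bad1 \<le> 2 ^ n * \<gamma> ^ q"
    proof -
      have "Pr p \<xi>x \<xi>y (\<lambda>\<omega>. q \<le> card {j\<in>{..<n}. NF \<xi>y k \<omega> (Ss ! j) a b}) \<le> 2 ^ card {..<n} * \<gamma> ^ q"
        by (rule many_events[OF _ dj1 _ dep_NF left g0]) (simp_all add: finj ebox_finite')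
      then show ?thesis unfolding Bad1_def by simp
    qed
    have dB1: "dep E1 Bad1"
    proof -
      have "dep (\<Union>j\<in>{..<n}. ebox k (Ss ! j) a b) Bad1"
        unfolding Bad1_def by (rule many_dep) (rule dep_NF)
      moreover have "(\<Union>j\<in>{..<n}. ebox k (Ss ! j) a b) \<subseteq> E1"
        unfolding E1_def using SjS by (blast intro: ebox_mono[OF Zk_mono, THEN subsetD])
      ultimately show ?thesis by (rule dep_mono)
    qed
    define succ where "succ c = {j\<in>{..<n}. \<not> NF \<xi>y k c (Ss ! j) a b}" for c
    define Jn where "Jn c i = sorted_list_of_set (succ c) ! i" for c i
    define TT where "TT c i = (SOME T. T \<subseteq> Rk c k (Ss ! Jn c i) a b \<and> fractal \<xi>y k T)" for c i
    define X where "X c g = (\<Union>t<B. TT c (g * B + t))" for c g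
    have succf: "finite (succ c)" for c unfolding succ_def by simp
    have card_succ: "8 * N * B \<le> card (succ c)" if nb: "\<not> Bad1 c" for c
    proof -
      have "{j\<in>{..<n}. NF \<xi>y k c (Ss ! j) a b} \<union> succ c = {..<n}" unfolding succ_def by auto
      moreover have "{j\<in>{..<n}. NF \<xi>y k c (Ss ! j) a b} \<inter> succ c = {}" unfolding succ_def by auto
      ultimately have "card {j\<in>{..<n}. NF \<xi>y k c (Ss ! j) a b} + card (succ c) = n"
        using card_Un_disjoint[of "{j\<in>{..<n}. NF \<xi>y k c (Ss ! j) a b}" "succ c"] succf by simp
      moreover have "\<not> q \<le> card {j\<in>{..<n}. NF \<xi>y k c (Ss ! j) a b}" using nb unfolding Bad1_def .
      ultimately have "q \<le> card (succ c)" using nq by linarith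
      moreover have "8 * N * B = q" unfolding qBN by (simp add: algebra_simps)
      ultimately show ?thesis by simp
    qed
    have surv: "Jn c i < n \<and> \<not> NF \<xi>y k c (Ss ! Jn c i) a b" if "\<not> Bad1 c" "i < 8 * N * B" for c i
    proof -
      have "i < card (succ c)" using card_succ[OF that(1)] that(2) by simp
      from sl_mem[OF succf this] show ?thesis unfolding Jn_def succ_def by simp
    qed
    have Jmono: "Jn c i1 < Jn c i2" if "\<not> Bad1 c" "i1 < i2" "i2 < 8 * N * B" for c i1 i2
    proof -
      have "i2 < card (succ c)" using card_succ[OF that(1)] that(3) by simp
      from sl_less[OF succf that(2) this] show ?thesis unfolding Jn_def .
    qed
    have TTp: "TT c i \<subseteq> Rk c k (Ss ! Jn c i) a b \<and> fractal \<xi>y k (TT c i)" if "\<not> Bad1 c" "i < 8 * N * B" for c i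
    proof -
      have "\<exists>T. T \<subseteq> Rk c k (Ss ! Jn c i) a b \<and> fractal \<xi>y k T" using surv[OF that] unfolding NF_def by blast
      then show ?thesis unfolding TT_def by (rule someI_ex)
    qed
    have TTz: "Zk k (TT c i) \<subseteq> Zk k (Ss ! Jn c i)" if "\<not> Bad1 c" "i < 8 * N * B" for c i
      using TTp[OF that] Zk_sub_Rk by blast
    have TTord: "precZ (Zk k (TT c i1)) (Zk k (TT c i2))" if "\<not> Bad1 c" "i1 < i2" "i2 < 8 * N * B" for c i1 i2
    proof -
      have "precZ (Zk k (Ss ! Jn c i1)) (Zk k (Ss ! Jn c i2))"
        using k_ordered_nth[OF ord Jmono[OF that]] surv[OF that(1,3)] lenSs by simp
      then show ?thesis using TTz[OF that(1) that(3)] TTz[OF that(1)] that(2,3) precZ_mono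
        by (meson order.strict_trans)
    qed
    have Xz: "Zk k (X c g) = (\<Union>t<B. Zk k (TT c (g * B + t)))" for c g
      unfolding X_def by (auto simp: Zk_eq)
    have idx1: "g * B + t < 8 * N * B" if "g < 8 * N" "t < B" for g t
    proof -
      have "g * B + t < (g + 1) * B" using that by simp
      also have "\<dots> \<le> 8 * N * B" using that by (intro mult_le_mono1) simp
      finally show ?thesis .
    qed
    have idx2: "g1 * B + t1 < g2 * B + t2" if "g1 < g2" "t1 < B" for g1 g2 t1 t2
    proof -
      have "g1 * B + t1 < (g1 + 1) * B" using that by simp
      also have "\<dots> \<le> g2 * B" using that by (intro mult_le_mono1) simp
      finally show ?thesis by simp
    qed
    have Xord: "precZ (Zk k (X c g1)) (Zk k (X c g2))" if "\<not> Bad1 c" "g1 < g2" "g2 < 8 * N" for c g1 g2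
      unfolding Xz
    proof (rule precZ_UN)
      fix t1 t2 assume t: "t1 \<in> {..<B}" "t2 \<in> {..<B}"
      show "precZ (Zk k (TT c (g1 * B + t1))) (Zk k (TT c (g2 * B + t2)))"
        by (rule TTord[OF that(1) idx2[OF that(2)] idx1[OF that(3)]]) (use t in auto)
    qed
    have Xfin: "finite (X c g)" if "\<not> Bad1 c" "g < 8 * N" for c g
      unfolding X_def using TTp[OF that(1) idx1[OF that(2)]] fractal_finite by blast
    have Xsub: "X c g \<subseteq> Rk c k S a b" if "\<not> Bad1 c" "g < 8 * N" for c g
    proof -
      have "TT c (g * B + t) \<subseteq> Rk c k S a b" if t: "t < B" for t
      proof -
        have i: "g * B + t < 8 * N * B" by (rule idx1[OF \<open>g < 8 * N\<close> t])
        have "TT c (g * B + t) \<subseteq> Rk c k (Ss ! Jn c (g * B + t)) a b" using TTp[OF \<open>\<not> Bad1 c\<close> i] by simp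
        also have "\<dots> \<subseteq> Rk c k S a b" by (rule Rk_mono[OF SjS]) (use surv[OF \<open>\<not> Bad1 c\<close> i] in simp)
        finally show ?thesis .
      qed
      then show ?thesis unfolding X_def by blast
    qed
    have PGF: "Pr p \<xi>x \<xi>y (\<lambda>\<omega>. NF \<xi>y k \<omega> (X c g) b e) \<le> \<gamma>" if "\<not> Bad1 c" "g < 8 * N" for c g
    proof -
      define Fs where "Fs = map (\<lambda>t. TT c (g * B + t)) [0..<B]"
      have Fsn: "Fs ! t = TT c (g * B + t)" if "t < B" for t using that unfolding Fs_def by simp
      have vb: "Pr p \<xi>x \<xi>y (\<lambda>\<omega>. NF \<xi>y k \<omega> (X c g) (i' * Lc ^ k) ((i' + 1) * Lc ^ k)) \<le> v k p"
      proof (rule v_bound[OF h1 Hh(1)])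
        show "length Fs = 2 ^ (4 * (h - 1))" unfolding Fs_def B_def by simp
        show "k_ordered k Fs" unfolding k_ordered_def
        proof (intro allI impI)
          fix t1 t2 assume t: "t1 < t2 \<and> t2 < length Fs"
          then have t': "t1 < B" "t2 < B" "t1 < t2" unfolding Fs_def by auto
          show "precZ (Zk k (Fs ! t1)) (Zk k (Fs ! t2))" unfolding Fsn[OF t'(1)] Fsn[OF t'(2)]
            by (rule TTord[OF that(1) _ idx1[OF that(2) t'(2)]]) (use t'(3) in simp)
        qed
        show "\<forall>T\<in>set Fs. fractal \<xi>y k T" unfolding Fs_def using TTp[OF that(1) idx1[OF that(2)]] by auto
        show "X c g = \<Union>(set Fs)" unfolding Fs_def X_def by auto
      qed
      have Hr: "\<forall>t<nR. H \<xi>x k (i' + 1 + int t) = 0"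
      proof (intro allI impI)
        fix t assume t: "t < nR"
        have "i' + 1 + int t \<in> {i0..i1} - {i'}" using t nRe ii by auto
        then show "H \<xi>x k (i' + 1 + int t) = 0" using Hz by blast
      qed
      have "Pr p \<xi>x \<xi>y (\<lambda>\<omega>. NF \<xi>y k \<omega> (X c g) b ((i' + 1 + int nR) * Lc ^ k))
         \<le> Pr p \<xi>x \<xi>y (\<lambda>\<omega>. NF \<xi>y k \<omega> (X c g) b ((i' + 1) * Lc ^ k)) + real nR * u k p"
        by (rule chain[OF Xfin[OF that] b_b1 Hr u0])
      moreover have "real nR * u k p \<le> (10 ^ 6 - 1) * M"
        by (rule mult_mono[OF nRb uM]) (use u0 in simp_all)
      ultimately have "Pr p \<xi>x \<xi>y (\<lambda>\<omega>. NF \<xi>y k \<omega> (X c g) b e) \<le> v k p + (10 ^ 6 - 1) * M"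
        using vb unfolding e_def b_def nRe by simp
      then show ?thesis unfolding \<gamma>_def using vM by simp
    qed
    define Bad2 where "Bad2 c \<omega> = (\<not> Bad1 c \<and> 7 * N + 1 \<le> card {g\<in>{..<8 * N}. NF \<xi>y k \<omega> (X c g) b e})" for c \<omega>
    define E2 where "E2 c = (if Bad1 c then {} else (\<Union>g\<in>{..<8 * N}. ebox k (X c g) b e))" for c
    have E2f: "finite (E2 c)" for c
      unfolding E2_def using Xfin ebox_finite' by auto
    have E2d: "E2 c \<inter> E1 = {}" for c
      unfolding E2_def E1_def using ebox_disj_cols[where b=b and a'=b and S=S and a=a and b'=e and k=k] by auto
    have djg: "disjoint_family_on (\<lambda>g. ebox k (X c g) b e) {..<8 * N}" if "\<not> Bad1 c" for c
      unfolding disjoint_family_on_def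
    proof (intro ballI impI)
      fix g1 g2 assume g: "g1 \<in> {..<8 * N}" "g2 \<in> {..<8 * N}" "g1 \<noteq> g2"
      have "Zk k (X c g1) \<inter> Zk k (X c g2) = {}"
      proof (cases "g1 < g2")
        case True then show ?thesis using Xord[OF that True] g precZ_disj by simp
      next
        case False then have g21: "g2 < g1" using g by simp
        have "precZ (Zk k (X c g2)) (Zk k (X c g1))" using Xord[OF that g21] g by simp
        then show ?thesis using precZ_disj by blast
      qed
      then show "ebox k (X c g1) b e \<inter> ebox k (X c g2) b e = {}" by (rule ebox_disj_rows)
    qed
    have Bd: "dep (E2 c) (Bad2 c)" for c
    proof (cases "Bad1 c")
      case True
      then have "Bad2 c = (\<lambda>\<omega>. False)" unfolding Bad2_def by simp
      then show ?thesis using True dep_const[of False] by (simp add: E2_def)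
    next
      case False
      have "dep (\<Union>g\<in>{..<8 * N}. ebox k (X c g) b e) (\<lambda>\<omega>. 7 * N + 1 \<le> card {g\<in>{..<8 * N}. NF \<xi>y k \<omega> (X c g) b e})"
        by (rule many_dep) (rule dep_NF)
      moreover have "Bad2 c = (\<lambda>\<omega>. 7 * N + 1 \<le> card {g\<in>{..<8 * N}. NF \<xi>y k \<omega> (X c g) b e})"
        unfolding Bad2_def using False by simp
      ultimately show ?thesis using False by (simp add: E2_def)
    qed
    have Bp: "Pr p \<xi>x \<xi>y (Bad2 c) \<le> 2 ^ (8 * N) * \<gamma> ^ (7 * N + 1)" for c
    proof (cases "Bad1 c")
      case True
      then have "Bad2 c = (\<lambda>\<omega>. False)" unfolding Bad2_def by simp
      then show ?thesis using g0 by (simp add: Pr_False)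
    next
      case False
      have "Pr p \<xi>x \<xi>y (\<lambda>\<omega>. 7 * N + 1 \<le> card {g\<in>{..<8 * N}. NF \<xi>y k \<omega> (X c g) b e})
          \<le> 2 ^ card {..<8 * N} * \<gamma> ^ (7 * N + 1)"
        by (rule many_events[OF _ djg[OF False] _ dep_NF PGF[OF False] g0])
           (simp_all add: Xfin[OF False] ebox_finite')
      moreover have "Bad2 c = (\<lambda>\<omega>. 7 * N + 1 \<le> card {g\<in>{..<8 * N}. NF \<xi>y k \<omega> (X c g) b e})"
        unfolding Bad2_def using False by simp
      ultimately show ?thesis by simp
    qed
    let ?K2 = "E1 \<union> (\<Union>c\<in>PiE E1 (\<lambda>_. UNIV). E2 c)"
    have PB2: "Pr p \<xi>x \<xi>y (\<lambda>\<omega>. Bad2 (restrict \<omega> E1) \<omega>) \<le> 2 ^ (8 * N) * \<gamma> ^ (7 * N + 1)"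
      by (rule cond_bound[OF E1f E2f E2d Bd Bp])
    have dB2: "dep ?K2 (\<lambda>\<omega>. Bad2 (restrict \<omega> E1) \<omega>)" by (rule cond_dep[OF E1f Bd])
    have fB2: "finite ?K2" by (rule cond_finite[OF E1f E2f])
    have incl: "Bad1 \<omega> \<or> Bad2 (restrict \<omega> E1) \<omega>"
      if nc: "\<not> contains_family \<xi>y k N (Rk \<omega> k S a e)" for \<omega>
    proof (rule ccontr)
      assume "\<not> (Bad1 \<omega> \<or> Bad2 (restrict \<omega> E1) \<omega>)"
      then have nb1: "\<not> Bad1 \<omega>" and nb2: "\<not> Bad2 (restrict \<omega> E1) \<omega>" by auto
      define c where "c = restrict \<omega> E1"
      have nb1c: "\<not> Bad1 c" using nb1 dep_restrict[OF dB1, of \<omega>] unfolding c_def by simp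
      have few: "\<not> 7 * N + 1 \<le> card {g\<in>{..<8 * N}. NF \<xi>y k \<omega> (X c g) b e}"
        using nb2 nb1c unfolding Bad2_def c_def by simp
      define Ok where "Ok = {g\<in>{..<8 * N}. \<not> NF \<xi>y k \<omega> (X c g) b e}"
      have Okf: "finite Ok" unfolding Ok_def by simp
      have cardOk: "N \<le> card Ok"
      proof -
        have "{g\<in>{..<8 * N}. NF \<xi>y k \<omega> (X c g) b e} \<union> Ok = {..<8 * N}" unfolding Ok_def by auto
        moreover have "{g\<in>{..<8 * N}. NF \<xi>y k \<omega> (X c g) b e} \<inter> Ok = {}" unfolding Ok_def by auto
        ultimately have "card {g\<in>{..<8 * N}. NF \<xi>y k \<omega> (X c g) b e} + card Ok = 8 * N"
          using card_Un_disjoint[of "{g\<in>{..<8 * N}. NF \<xi>y k \<omega> (X c g) b e}" Ok] Okf by simp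
        then show ?thesis using few by simp
      qed
      define Gs where "Gs = sorted_list_of_set Ok"
      define W where "W g = (SOME W. W \<subseteq> Rk \<omega> k (X c g) b e \<and> fractal \<xi>y k W)" for g
      have Gsp: "Gs ! i < 8 * N \<and> \<not> NF \<xi>y k \<omega> (X c (Gs ! i)) b e" if "i < N" for i
      proof -
        have "i < card Ok" using that cardOk by simp
        from sl_mem[OF Okf this] show ?thesis unfolding Gs_def Ok_def by simp
      qed
      have Gsl: "Gs ! i1 < Gs ! i2" if "i1 < i2" "i2 < N" for i1 i2
        unfolding Gs_def by (rule sl_less[OF Okf that(1)]) (use that(2) cardOk in simp)
      have Wp: "W (Gs ! i) \<subseteq> Rk \<omega> k (X c (Gs ! i)) b e \<and> fractal \<xi>y k (W (Gs ! i))" if "i < N" for i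
      proof -
        have "\<exists>W. W \<subseteq> Rk \<omega> k (X c (Gs ! i)) b e \<and> fractal \<xi>y k W" using Gsp[OF that] unfolding NF_def by blast
        then show ?thesis unfolding W_def by (rule someI_ex)
      qed
      have RkE: "Rk c k S a b = Rk \<omega> k S a b"
        by (rule Rk_dep) (simp add: c_def E1_def)
      have Wsub: "W (Gs ! i) \<subseteq> Rk \<omega> k S a e" if "i < N" for i
      proof -
        have "X c (Gs ! i) \<subseteq> Rk \<omega> k S a b" using Xsub[OF nb1c] Gsp[OF that] RkE by simp
        then have "Rk \<omega> k (X c (Gs ! i)) b e \<subseteq> Rk \<omega> k (Rk \<omega> k S a b) b e" by (rule Rk_mono)
        also have "\<dots> \<subseteq> Rk \<omega> k S a e" by (rule Rk_comp[OF ab be])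
        finally show ?thesis using Wp[OF that] by blast
      qed
      define fam where "fam = map (\<lambda>i. W (Gs ! i)) [0..<N]"
      have "contains_family \<xi>y k N (Rk \<omega> k S a e)"
        unfolding contains_family_def
      proof (intro exI conjI)
        show "length fam = N" unfolding fam_def by simp
        show "\<forall>T\<in>set fam. T \<subseteq> Rk \<omega> k S a e \<and> fractal \<xi>y k T"
          unfolding fam_def using Wsub Wp by auto
        show "k_ordered k fam" unfolding k_ordered_def
        proof (intro allI impI)
          fix i1 i2 assume i: "i1 < i2 \<and> i2 < length fam"
          then have i': "i1 < i2" "i2 < N" unfolding fam_def by auto
          have "precZ (Zk k (X c (Gs ! i1))) (Zk k (X c (Gs ! i2)))"
            by (rule Xord[OF nb1c Gsl[OF i'] conjunct1[OF Gsp[OF i'(2)]]])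
          moreover have "Zk k (W (Gs ! i1)) \<subseteq> Zk k (X c (Gs ! i1))"
            using Wp[of i1] i' Zk_sub_Rk by (meson order.strict_trans)
          moreover have "Zk k (W (Gs ! i2)) \<subseteq> Zk k (X c (Gs ! i2))"
            using Wp[of i2] i' Zk_sub_Rk by blast
          ultimately show "precZ (Zk k (fam ! i1)) (Zk k (fam ! i2))"
            unfolding fam_def using i' precZ_mono by simp
        qed
      qed
      then show False using nc by simp
    qed
    have fE: "finite (E1 \<union> ?K2)" using E1f fB2 by simp
    have "Pr p \<xi>x \<xi>y (\<lambda>\<omega>. \<not> contains_family \<xi>y k N (Rk \<omega> k S a e))
        \<le> Pr p \<xi>x \<xi>y (\<lambda>\<omega>. Bad1 \<omega> \<or> Bad2 (restrict \<omega> E1) \<omega>)"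
    proof (rule Pr_mono)
      show "\<And>\<omega>. \<not> contains_family \<xi>y k N (Rk \<omega> k S a e) \<Longrightarrow> Bad1 \<omega> \<or> Bad2 (restrict \<omega> E1) \<omega>"
        by (rule incl)
      show "finite (E1 \<union> ?K2)" by (rule fE)
      show "dep (E1 \<union> ?K2) (\<lambda>\<omega>. Bad1 \<omega> \<or> Bad2 (restrict \<omega> E1) \<omega>)" by (rule dep_or[OF dB1 dB2])
    qed
    also have "\<dots> \<le> Pr p \<xi>x \<xi>y Bad1 + Pr p \<xi>x \<xi>y (\<lambda>\<omega>. Bad2 (restrict \<omega> E1) \<omega>)"
      by (rule Pr_union[OF E1f dB1 fB2 dB2])
    also have "\<dots> \<le> 2 ^ n * \<gamma> ^ q + 2 ^ (8 * N) * \<gamma> ^ (7 * N + 1)"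
      using PB1 PB2 by simp
    also have "\<dots> \<le> 272 * \<gamma> ^ 2" unfolding nq by (rule numeric[OF g0 g4 q2 N1])
    also have "\<dots> \<le> real_of_int Lc ^ 5 * M ^ 2"
      unfolding \<gamma>_def LR by (simp add: power_mult_distrib)
    finally show ?thesis unfolding a_def e_def N_def M_def .
  qed
qed


end
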